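(* Let $\beta$ be a well-formed execution of the SODA algorithm described in the context, and let $\Pi$ be the set of operations of $\beta$ to which a tag is associated as follows: for a write $\pi$, $(tag(\pi),value(\pi))=(t_w,v)$ is the pair it disseminates in its put phase; for a completed read $\pi$, $(tag(\pi),value(\pi))=(t_{read},v)$ where $v$ is the returned value and $t_{read}$ is the tag of the $k$ coded elements it decoded. Define $\pi\prec\phi$ iff $tag(\pi)<tag(\phi)$, or $tag(\pi)=tag(\phi)$ with $\pi$ a write and $\phi$ a read. Then $\prec$ satisfies: (P1) there are no operations $\pi_1,\pi_2$ such that $\pi_1$ completes before $\pi_2$ is invoked and yet $\pi_2\prec\pi_1$; (P2) if $\pi_1$ is a write and $\pi_2$ is any other operation, then $\pi_1\prec\pi_2$ or $\pi_2\prec\pi_1$; (P3) every read returns the value of the last write preceding it with respect to $\prec$, and returns the initial value $v_0$ if no write precedes it.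
   Context: System model: asynchronous message passing with writers $\mathcal{W}$, readers $\mathcal{R}$ and $n$ servers $\mathcal{S}$ ordered $s_1<\dots<s_n$; reliable point-to-point channels between every client and server and every two servers (message eventually delivered if destination does not crash, even if the sender crashes; arbitrary delays and order). Processes fail by crashing only; any number of clients and at most $f$ servers crash, $1\le f\le (n-1)/2$. Well-formed: each client invokes an operation only after its previous one completed. An operation precedes another if its response occurs before the other's invocation. Coding: values in a set $V$ with initial value $v_0$; an $[n,k]$ MDS code with $k=n-f$, encoder $\Phi$ ($\Phi_s(v)$ = coded element for server $s$) and decoder $\Phi^{-1}$ recovering $v$ from any $k$ coded elements of $v$ (with known server indices). Tags: pairs $t=(z,w)$, $z\in\mathbb{N}$, $w\in\mathcal{W}$, with $t_2>t_1$ iff $t_2.z>t_1.z$, or $t_2.z=t_1.z$ and $t_2.w>t_1.w$; $t_0$ is the initial tag (smaller than all others). Dissemination primitives. md-value-send$(t,v)$ by a writer: $(t,v)$ is sent to servers $s_1,\dots,s_{f+1}$; each such $s_i$, on first receipt, forwards $(t,v)$ to $s_{i+1},\dots,s_{f+1}$, sends $(t,\Phi_{s'}(v))$ to every other server $s'$, and then delivers $(t,\Phi_{s_i}(v))$ locally; each other server delivers the coded element $(t,\Phi_{s}(v))$ it receives ("md-value-deliver"). md-meta-send$(m)$: identical, except every server delivers the metadata message $m$ itself ("md-meta-deliver"). Each server delivers each disseminated message once. SODA writer $w$, write$(v)$: (get-tag) send a tag query to all servers, wait for responses (their locally stored tags) from a majority, let $t_{max}$ be the highest; (put) set $t_w=(t_{max}.z+1,w)$,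 invoke md-value-send$(t_w,v)$, wait for acknowledgments from $k$ servers, terminate. SODA reader $r$, read: (get-tag) query all servers for their tags, wait for a majority, let $t_r$ be the highest; (get-data) invoke md-meta-send(READ-VALUE,$(r,t_r)$), and collect received pairs $(t,c)$ until $k$ of them, from distinct servers, carry the same tag $t_{read}$; decode $v=\Phi^{-1}$ of these $k$ coded elements; (complete) invoke md-meta-send(READ-COMPLETE,$(r,t_r)$) and return $v$. (Each read carries a unique identifier in addition to $r$.) SODA server $s$: state: a pair $(t,c_s)$, initially $(t_0,\Phi_s(v_0))$; a set $R_c$ of registered pairs $(r,t_r)$, initially empty; a set $H$ of triples $(t,s',r)$, initially empty. On a tag query from a writer or reader: reply with local $t$. On md-value-deliver$(t_w,c'_s)$: for each $(r,t_r)\in R_c$ with $t_w\ge t_r$: send $(t_w,c'_s)$ to $r$, add $(t_w,s,r)$ to $H$, invoke md-meta-send(READ-DISPERSE,$(t_w,s,r)$); then if $t_w>t$ set $(t,c_s)\gets(t_w,c'_s)$; send an acknowledgment to the writer. On md-meta-deliver(READ-VALUE,$(r,t_r)$): if $(t_0,s,r)\in H$, remove from $H$ all triples with reader $r$; else add $(r,t_r)$ to $R_c$ and, if $t\ge t_r$, send $(t,c_s)$ to $r$, add $(t,s,r)$ to $H$ and invoke md-meta-send(READ-DISPERSE,$(t,s,r)$). On md-meta-deliver(READ-COMPLETE,$(r,t_r)$): if some $(r,t'_r)\in R_c$, remove it and remove all triples with reader $r$ from $H$; else add $(t_0,s,r)$ to $H$. On md-meta-deliver(READ-DISPERSE,$(t,s',r)$):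 add $(t,s',r)$ to $H$; if some $(r,t_r)\in R_c$ and the number of triples in $H$ with tag $t$ and reader $r$ is at least $k$, remove $(r,t_r)$ from $R_c$ and remove all triples with reader $r$ from $H$. *)

theory Defs
  imports Main "HOL-Library.Multiset"
begin

datatype 'w tag = T0 | Tag nat 'w

fun tz :: "'w tag \<Rightarrow> nat" where
  "tz T0 = 0"
| "tz (Tag z w) = z"

instantiation tag :: (linorder) linorder
begin

fun less_eq_tag :: "'a tag \<Rightarrow> 'a tag \<Rightarrow> bool" where
  "less_eq_tag T0 _ = True"
| "less_eq_tag (Tag _ _) T0 = False"
| "less_eq_tag (Tag z w) (Tag z' w') = (z < z' \<or> (z = z' \<and> w \<le> w'))"

definition less_tag :: "'a tag \<Rightarrow> 'a tag \<Rightarrow> bool" where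
  "less_tag x y = (x \<le> y \<and> \<not> y \<le> x)"

instance
proof
  fix x y z :: "'a tag"
  show "(x < y) = (x \<le> y \<and> \<not> y \<le> x)" by (simp add: less_tag_def)
  show "x \<le> x" by (cases x) auto
  show "x \<le> y \<Longrightarrow> y \<le> z \<Longrightarrow> x \<le> z"
    by (cases x; cases y; cases z) auto
  show "x \<le> y \<Longrightarrow> y \<le> x \<Longrightarrow> x = y"
    by (cases x; cases y) auto
  show "x \<le> y \<or> y \<le> x"
    by (cases x; cases y) auto
qed

end

text \<open>Servers are the natural numbers 0,...,n-1 (server s_(i+1) is index i); writers have
  type 'w, readers type 'r.\<close>

datatype ('w, 'r) proc = PW 'w | PR 'r | PS nat

text \<open>A read is identified by its reader and a per-reader sequence number (unique read id).\<close>
type_synonym 'r readid = "'r \<times> nat"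

datatype ('w, 'r) meta =
    ReadValue "'r readid" "'w tag"
  | ReadComplete "'r readid" "'w tag"
  | ReadDisperse "'w tag" nat "'r readid"

datatype ('w, 'r, 'v, 'c) msg =
    TagQ nat                       \<comment> \<open>tag query, carries the operation number\<close>
  | TagR nat "'w tag"
  | MDFull "'w tag" 'v             \<comment> \<open>md-value-send: full value, to s_1..s_(f+1)\<close>
  | MDCoded "'w tag" 'c            \<comment> \<open>md-value-send: coded element, to the other servers\<close>
  | MDMeta "('w, 'r) meta"
  | Ack "'w tag"
  | ToReader "'r readid" "'w tag" 'c

text \<open>Keys used by a server to deliver each disseminated message only once.\<close>
datatype ('w, 'r, 'v, 'c) mdkey = KFull "'w tag" 'v | KCoded "'w tag" 'c | KMeta "('w, 'r) meta"

type_synonym ('w, 'r, 'v, 'c) outs = "(('w, 'r) proc \<times> ('w, 'r, 'v, 'c) msg) list"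
type_synonym ('w, 'r, 'v, 'c) packet = "('w, 'r) proc \<times> ('w, 'r) proc \<times> ('w, 'r, 'v, 'c) msg"

record ('w, 'r, 'v, 'c) sst =
  stag :: "'w tag"
  sval :: 'c
  sRc :: "('r readid \<times> 'w tag) set"
  sH :: "('w tag \<times> nat \<times> 'r readid) set"
  sseen :: "('w, 'r, 'v, 'c) mdkey set"

datatype ('w, 'v) wphase = WIdle | WGet nat 'v "(nat \<times> 'w tag) set" | WPut nat "'w tag" "nat set"

text \<open>wlog and wdone are ghost fields: wlog j records the pair (t_w,v) disseminated by the j-th
  write in its put phase; wdone is the set of completed writes.\<close>
record ('w, 'v) wst =
  wph :: "('w, 'v) wphase"
  wcnt :: nat
  wlog :: "nat \<Rightarrow> ('w tag \<times> 'v) option"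
  wdone :: "nat set"

datatype ('w, 'c) rphase = RIdle | RGet nat "(nat \<times> 'w tag) set"
  | RData nat "'w tag" "(nat \<times> 'w tag \<times> 'c) set"

text \<open>rlog is a ghost field: rlog j records (t_read, returned value) of the completed j-th read.\<close>
record ('w, 'v, 'c) rst =
  rph :: "('w, 'c) rphase"
  rcnt :: nat
  rlog :: "nat \<Rightarrow> ('w tag \<times> 'v) option"

text \<open>Global state: multiset of messages in transit, per-process outbox of messages that the
  process still has to send (in order; a crash loses the unsent ones, which models crashes
  in the middle of a sequence of sends), crashed processes and local states.\<close>
record ('w, 'r, 'v, 'c) gst =
  net :: "('w, 'r, 'v, 'c) packet multiset"
  outb :: "('w, 'r) proc \<Rightarrow> ('w, 'r, 'v, 'c) outs"
  crashed :: "('w, 'r) proc set"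
  srv :: "nat \<Rightarrow> ('w, 'r, 'v, 'c) sst"
  wrs :: "'w \<Rightarrow> ('w, 'v) wst"
  rds :: "'r \<Rightarrow> ('w, 'v, 'c) rst"

datatype ('w, 'r, 'v, 'c) action =
    Skip
  | Send "('w, 'r) proc"
  | Deliver "('w, 'r, 'v, 'c) packet"
  | Crash "('w, 'r) proc"
  | InvokeW 'w 'v
  | InvokeR 'r

definition md_value_send :: "nat \<Rightarrow> 'w tag \<Rightarrow> 'v \<Rightarrow> ('w, 'r, 'v, 'c) outs" where
  "md_value_send f t v = map (\<lambda>j. (PS j, MDFull t v)) [0..<Suc f]"

definition md_meta_send :: "nat \<Rightarrow> ('w, 'r) meta \<Rightarrow> ('w, 'r, 'v, 'c) outs" where
  "md_meta_send f m = map (\<lambda>j. (PS j, MDMeta m)) [0..<Suc f]"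

fun ack_out :: "'w tag \<Rightarrow> ('w, 'r, 'v, 'c) outs" where
  "ack_out T0 = []"
| "ack_out (Tag z w) = [(PW w, Ack (Tag z w))]"

definition remove_reader :: "'r readid \<Rightarrow> ('w tag \<times> nat \<times> 'r readid) set \<Rightarrow> ('w tag \<times> nat \<times> 'r readid) set" where
  "remove_reader r H = {x \<in> H. snd (snd x) \<noteq> r}"

text \<open>md-value-deliver (t_w, c) at server i.  The registered readers may be served in any order.\<close>
definition value_deliver ::
  "nat \<Rightarrow> nat \<Rightarrow> 'w::linorder tag \<Rightarrow> 'c \<Rightarrow> ('w, 'r, 'v, 'c) sst \<Rightarrow> ('w, 'r, 'v, 'c) sst
     \<Rightarrow> ('w, 'r, 'v, 'c) outs \<Rightarrow> bool" where
  "value_deliver f i t c \<sigma> \<sigma>' os \<longleftrightarrow>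
     (\<exists>xs. distinct xs \<and> set xs = {x \<in> sRc \<sigma>. snd x \<le> t} \<and>
        os = concat (map (\<lambda>x. (PR (fst (fst x)), ToReader (fst x) t c)
                                 # md_meta_send f (ReadDisperse t i (fst x))) xs) @ ack_out t \<and>
        \<sigma>' = (let \<sigma>1 = \<sigma>\<lparr>sH := sH \<sigma> \<union> {(t, i, fst x) | x. x \<in> sRc \<sigma> \<and> snd x \<le> t}\<rparr>
              in if stag \<sigma> < t then \<sigma>1\<lparr>stag := t, sval := c\<rparr> else \<sigma>1))"

text \<open>md-meta-deliver m at server i (k = n - f).\<close>
fun meta_deliver ::
  "nat \<Rightarrow> nat \<Rightarrow> nat \<Rightarrow> ('w::linorder, 'r) meta \<Rightarrow> ('w, 'r, 'v, 'c) sst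
     \<Rightarrow> ('w, 'r, 'v, 'c) sst \<times> ('w, 'r, 'v, 'c) outs" where
  "meta_deliver k f i (ReadValue r tr) \<sigma> =
     (if (T0, i, r) \<in> sH \<sigma> then (\<sigma>\<lparr>sH := remove_reader r (sH \<sigma>)\<rparr>, [])
      else (let \<sigma>1 = \<sigma>\<lparr>sRc := insert (r, tr) (sRc \<sigma>)\<rparr> in
            if tr \<le> stag \<sigma>
            then (\<sigma>1\<lparr>sH := insert (stag \<sigma>, i, r) (sH \<sigma>)\<rparr>,
                  (PR (fst r), ToReader r (stag \<sigma>) (sval \<sigma>))
                    # md_meta_send f (ReadDisperse (stag \<sigma>) i r))
            else (\<sigma>1, [])))"
| "meta_deliver k f i (ReadComplete r tr) \<sigma> =
     (if \<exists>t'. (r, t') \<in> sRc \<sigma>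
      then (\<sigma>\<lparr>sRc := {x \<in> sRc \<sigma>. fst x \<noteq> r}, sH := remove_reader r (sH \<sigma>)\<rparr>, [])
      else (\<sigma>\<lparr>sH := insert (T0, i, r) (sH \<sigma>)\<rparr>, []))"
| "meta_deliver k f i (ReadDisperse t s' r) \<sigma> =
     (let H1 = insert (t, s', r) (sH \<sigma>) in
      if (\<exists>tr. (r, tr) \<in> sRc \<sigma>) \<and> k \<le> card {x \<in> H1. fst x = t \<and> snd (snd x) = r}
      then (\<sigma>\<lparr>sRc := {x \<in> sRc \<sigma>. fst x \<noteq> r}, sH := remove_reader r H1\<rparr>, [])
      else (\<sigma>\<lparr>sH := H1\<rparr>, []))"

definition srv_recv ::
  "nat \<Rightarrow> nat \<Rightarrow> (nat \<Rightarrow> 'v \<Rightarrow> 'c) \<Rightarrow> nat \<Rightarrow> ('w::linorder, 'r) proc \<Rightarrow> ('w, 'r, 'v, 'c) msg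
     \<Rightarrow> ('w, 'r, 'v, 'c) sst \<Rightarrow> ('w, 'r, 'v, 'c) sst \<Rightarrow> ('w, 'r, 'v, 'c) outs \<Rightarrow> bool" where
  "srv_recv n f enc i p m \<sigma> \<sigma>' os \<longleftrightarrow>
    (case m of
       TagQ j \<Rightarrow> \<sigma>' = \<sigma> \<and> os = [(p, TagR j (stag \<sigma>))]
     | MDFull t v \<Rightarrow>
         (if i \<le> f \<and> KFull t v \<notin> sseen \<sigma>
          then (\<exists>os2. value_deliver f i t (enc i v) (\<sigma>\<lparr>sseen := insert (KFull t v) (sseen \<sigma>)\<rparr>) \<sigma>' os2 \<and>
                  os = map (\<lambda>j. (PS j, MDFull t v)) [Suc i..<Suc f]
                       @ map (\<lambda>j. (PS j, MDCoded t (enc j v))) [Suc f..<n] @ os2)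
          else \<sigma>' = \<sigma> \<and> os = [])
     | MDCoded t c \<Rightarrow>
         (if f < i \<and> KCoded t c \<notin> sseen \<sigma>
          then value_deliver f i t c (\<sigma>\<lparr>sseen := insert (KCoded t c) (sseen \<sigma>)\<rparr>) \<sigma>' os
          else \<sigma>' = \<sigma> \<and> os = [])
     | MDMeta mm \<Rightarrow>
         (if KMeta mm \<notin> sseen \<sigma>
          then (let (\<sigma>2, os2) = meta_deliver (n - f) f i mm (\<sigma>\<lparr>sseen := insert (KMeta mm) (sseen \<sigma>)\<rparr>)
                in \<sigma>' = \<sigma>2 \<and>
                   os = (if i \<le> f then map (\<lambda>j. (PS j, MDMeta mm)) [Suc i..<Suc f]
                                      @ map (\<lambda>j. (PS j, MDMeta mm)) [Suc f..<n]
                         else []) @ os2)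
          else \<sigma>' = \<sigma> \<and> os = [])
     | _ \<Rightarrow> \<sigma>' = \<sigma> \<and> os = [])"

fun wr_recv ::
  "nat \<Rightarrow> nat \<Rightarrow> 'w::linorder \<Rightarrow> ('w, 'r) proc \<Rightarrow> ('w, 'r, 'v, 'c) msg
     \<Rightarrow> ('w, 'v) wst \<Rightarrow> ('w, 'v) wst \<times> ('w, 'r, 'v, 'c) outs" where
  "wr_recv n f w (PS s) (TagR j t) \<sigma> =
     (case wph \<sigma> of
        WGet j' v R \<Rightarrow>
          (if j = j' then
             (let R' = insert (s, t) R in
              if n < 2 * card (fst ` R') then
                (let tw = Tag (Suc (tz (Max (snd ` R')))) w in
                 (\<sigma>\<lparr>wph := WPut j tw {}, wlog := (wlog \<sigma>)(j \<mapsto> (tw, v))\<rparr>, md_value_send f tw v))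
              else (\<sigma>\<lparr>wph := WGet j v R'\<rparr>, []))
           else (\<sigma>, []))
      | _ \<Rightarrow> (\<sigma>, []))"
| "wr_recv n f w (PS s) (Ack t) \<sigma> =
     (case wph \<sigma> of
        WPut j tw A \<Rightarrow>
          (if t = tw then
             (let A' = insert s A in
              if n - f \<le> card A' then (\<sigma>\<lparr>wph := WIdle, wdone := insert j (wdone \<sigma>)\<rparr>, [])
              else (\<sigma>\<lparr>wph := WPut j tw A'\<rparr>, []))
           else (\<sigma>, []))
      | _ \<Rightarrow> (\<sigma>, []))"
| "wr_recv n f w _ _ \<sigma> = (\<sigma>, [])"

text \<open>Reader r receives message m from process p.  dec is the MDS decoder; it is applied to the
  k coded elements (with their server indices) carrying tag t_read.\<close>
definition rd_recv ::
  "nat \<Rightarrow> nat \<Rightarrow> ((nat \<Rightarrow> 'c option) \<Rightarrow> 'v) \<Rightarrow> 'r \<Rightarrow> ('w::linorder, 'r) proc \<Rightarrow> ('w, 'r, 'v, 'c) msg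
     \<Rightarrow> ('w, 'v, 'c) rst \<Rightarrow> ('w, 'v, 'c) rst \<Rightarrow> ('w, 'r, 'v, 'c) outs \<Rightarrow> bool" where
  "rd_recv n f dec r p m \<sigma> \<sigma>' os \<longleftrightarrow>
    (case (p, m, rph \<sigma>) of
       (PS s, TagR j t, RGet j' R) \<Rightarrow>
         (if j = j' then
            (let R' = insert (s, t) R in
             if n < 2 * card (fst ` R') then
               (let tr = Max (snd ` R') in
                \<sigma>' = \<sigma>\<lparr>rph := RData j tr {}\<rparr> \<and> os = md_meta_send f (ReadValue (r, j) tr))
             else \<sigma>' = \<sigma>\<lparr>rph := RGet j R'\<rparr> \<and> os = [])
          else \<sigma>' = \<sigma> \<and> os = [])
     | (PS s, ToReader rid t c, RData j tr P) \<Rightarrow>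
         (if rid = (r, j) then
            (let P' = insert (s, t, c) P in
             if n - f \<le> card {s'. \<exists>c'. (s', t, c') \<in> P'} then
               (\<exists>S g. S \<subseteq> {s'. (s', t, g s') \<in> P'} \<and> card S = n - f \<and>
                   \<sigma>' = \<sigma>\<lparr>rph := RIdle,
                           rlog := (rlog \<sigma>)(j \<mapsto> (t, dec (\<lambda>x. if x \<in> S then Some (g x) else None)))\<rparr> \<and>
                   os = md_meta_send f (ReadComplete (r, j) tr))
             else \<sigma>' = \<sigma>\<lparr>rph := RData j tr P'\<rparr> \<and> os = [])
          else \<sigma>' = \<sigma> \<and> os = [])
     | _ \<Rightarrow> \<sigma>' = \<sigma> \<and> os = [])"

definition init_state :: "nat \<Rightarrow> (nat \<Rightarrow> 'v \<Rightarrow> 'c) \<Rightarrow> 'v \<Rightarrow> ('w, 'r, 'v, 'c) gst" where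
  "init_state n enc v0 =
     \<lparr>net = {#}, outb = (\<lambda>_. []), crashed = {},
      srv = (\<lambda>i. \<lparr>stag = T0, sval = enc i v0, sRc = {}, sH = {}, sseen = {}\<rparr>),
      wrs = (\<lambda>_. \<lparr>wph = WIdle, wcnt = 0, wlog = (\<lambda>_. None), wdone = {}\<rparr>),
      rds = (\<lambda>_. \<lparr>rph = RIdle, rcnt = 0, rlog = (\<lambda>_. None)\<rparr>)\<rparr>"

text \<open>One atomic step.  Well-formedness is built in: a client can only be invoked when idle.\<close>
definition step ::
  "nat \<Rightarrow> nat \<Rightarrow> (nat \<Rightarrow> 'v \<Rightarrow> 'c) \<Rightarrow> ((nat \<Rightarrow> 'c option) \<Rightarrow> 'v)
     \<Rightarrow> ('w::linorder, 'r, 'v, 'c) gst \<Rightarrow> ('w, 'r, 'v, 'c) action \<Rightarrow> ('w, 'r, 'v, 'c) gst \<Rightarrow> bool" where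
  "step n f enc dec s a s' \<longleftrightarrow>
    (case a of
       Skip \<Rightarrow> s' = s
     | Send p \<Rightarrow> p \<notin> crashed s \<and> outb s p \<noteq> [] \<and>
         s' = s\<lparr>net := net s + {# (p, fst (hd (outb s p)), snd (hd (outb s p))) #},
                outb := (outb s)(p := tl (outb s p))\<rparr>
     | Deliver pk \<Rightarrow>
         (case pk of (p, q, m) \<Rightarrow>
           pk \<in># net s \<and> q \<notin> crashed s \<and>
           (let s1 = s\<lparr>net := net s - {# pk #}\<rparr> in
            case q of
              PS i \<Rightarrow> (\<exists>\<sigma>' os. srv_recv n f enc i p m (srv s i) \<sigma>' os \<and>
                         s' = s1\<lparr>srv := (srv s)(i := \<sigma>'), outb := (outb s)(q := outb s q @ os)\<rparr>)
            | PW w \<Rightarrow> (case wr_recv n f w p m (wrs s w) of (\<sigma>', os) \<Rightarrow>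
                         s' = s1\<lparr>wrs := (wrs s)(w := \<sigma>'), outb := (outb s)(q := outb s q @ os)\<rparr>)
            | PR r \<Rightarrow> (\<exists>\<sigma>' os. rd_recv n f dec r p m (rds s r) \<sigma>' os \<and>
                         s' = s1\<lparr>rds := (rds s)(r := \<sigma>'), outb := (outb s)(q := outb s q @ os)\<rparr>)))
     | Crash p \<Rightarrow> p \<notin> crashed s \<and> (\<forall>i. p = PS i \<longrightarrow> i < n) \<and>
         s' = s\<lparr>crashed := insert p (crashed s)\<rparr>
     | InvokeW w v \<Rightarrow> PW w \<notin> crashed s \<and> wph (wrs s w) = WIdle \<and>
         (let j = Suc (wcnt (wrs s w)) in
          s' = s\<lparr>wrs := (wrs s)(w := (wrs s w)\<lparr>wph := WGet j v {}, wcnt := j\<rparr>),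
                 outb := (outb s)(PW w := outb s (PW w) @ map (\<lambda>i. (PS i, TagQ j)) [0..<n])\<rparr>)
     | InvokeR r \<Rightarrow> PR r \<notin> crashed s \<and> rph (rds s r) = RIdle \<and>
         (let j = Suc (rcnt (rds s r)) in
          s' = s\<lparr>rds := (rds s)(r := (rds s r)\<lparr>rph := RGet j {}, rcnt := j\<rparr>),
                 outb := (outb s)(PR r := outb s (PR r) @ map (\<lambda>i. (PS i, TagQ j)) [0..<n])\<rparr>))"

text \<open>An execution (finite executions are those that eventually only Skip).\<close>
definition soda_execution ::
  "nat \<Rightarrow> nat \<Rightarrow> (nat \<Rightarrow> 'v \<Rightarrow> 'c) \<Rightarrow> ((nat \<Rightarrow> 'c option) \<Rightarrow> 'v) \<Rightarrow> 'v
     \<Rightarrow> (nat \<Rightarrow> ('w::linorder, 'r, 'v, 'c) gst) \<Rightarrow> (nat \<Rightarrow> ('w, 'r, 'v, 'c) action) \<Rightarrow> bool" where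
  "soda_execution n f enc dec v0 st act \<longleftrightarrow>
     st 0 = init_state n enc v0 \<and> (\<forall>i. step n f enc dec (st i) (act i) (st (Suc i)))"

text \<open>Reliable channels: a message in transit is eventually delivered if its destination never
  crashes (even if the sender crashed); a non-crashed process eventually performs its pending sends.\<close>
definition reliable ::
  "(nat \<Rightarrow> ('w, 'r, 'v, 'c) gst) \<Rightarrow> (nat \<Rightarrow> ('w, 'r, 'v, 'c) action) \<Rightarrow> bool" where
  "reliable st act \<longleftrightarrow>
     (\<forall>i pk. pk \<in># net (st i) \<and> (\<forall>j. fst (snd pk) \<notin> crashed (st j)) \<longrightarrow> (\<exists>j\<ge>i. act j = Deliver pk)) \<and>
     (\<forall>i p. outb (st i) p \<noteq> [] \<and> (\<forall>j. p \<notin> crashed (st j)) \<longrightarrow> (\<exists>j\<ge>i. act j = Send p))"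

text \<open>Operation OpW w j is the j-th write of writer w, OpR r j the j-th read of reader r.\<close>
datatype ('w, 'r) oper = OpW 'w nat | OpR 'r nat

fun is_write :: "('w, 'r) oper \<Rightarrow> bool" where
  "is_write (OpW _ _) = True" | "is_write (OpR _ _) = False"

fun is_read :: "('w, 'r) oper \<Rightarrow> bool" where
  "is_read (OpW _ _) = False" | "is_read (OpR _ _) = True"

fun oplog :: "('w, 'r, 'v, 'c) gst \<Rightarrow> ('w, 'r) oper \<Rightarrow> ('w tag \<times> 'v) option" where
  "oplog s (OpW w j) = wlog (wrs s w) j"
| "oplog s (OpR r j) = rlog (rds s r) j"

text \<open>Pi: operations with an associated tag (writes that reached the put phase, completed reads).\<close>
definition in_Pi :: "(nat \<Rightarrow> ('w, 'r, 'v, 'c) gst) \<Rightarrow> ('w, 'r) oper \<Rightarrow> bool" where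
  "in_Pi st \<pi> \<longleftrightarrow> (\<exists>i. oplog (st i) \<pi> \<noteq> None)"

definition optv :: "(nat \<Rightarrow> ('w, 'r, 'v, 'c) gst) \<Rightarrow> ('w, 'r) oper \<Rightarrow> 'w tag \<times> 'v" where
  "optv st \<pi> = the (oplog (st (SOME i. oplog (st i) \<pi> \<noteq> None)) \<pi>)"

definition optag :: "(nat \<Rightarrow> ('w, 'r, 'v, 'c) gst) \<Rightarrow> ('w, 'r) oper \<Rightarrow> 'w tag" where
  "optag st \<pi> = fst (optv st \<pi>)"

definition opval :: "(nat \<Rightarrow> ('w, 'r, 'v, 'c) gst) \<Rightarrow> ('w, 'r) oper \<Rightarrow> 'v" where
  "opval st \<pi> = snd (optv st \<pi>)"

fun opcnt :: "('w, 'r, 'v, 'c) gst \<Rightarrow> ('w, 'r) oper \<Rightarrow> nat" where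
  "opcnt s (OpW w _) = wcnt (wrs s w)"
| "opcnt s (OpR r _) = rcnt (rds s r)"

fun opnum :: "('w, 'r) oper \<Rightarrow> nat" where
  "opnum (OpW _ j) = j" | "opnum (OpR _ j) = j"

text \<open>The invocation of operation pi is step i (transition st i -> st (Suc i)).\<close>
definition invoked_at :: "(nat \<Rightarrow> ('w, 'r, 'v, 'c) gst) \<Rightarrow> ('w, 'r) oper \<Rightarrow> nat \<Rightarrow> bool" where
  "invoked_at st \<pi> i \<longleftrightarrow> opcnt (st i) \<pi> < opnum \<pi> \<and> opnum \<pi> \<le> opcnt (st (Suc i)) \<pi>"

text \<open>The response of operation pi is step i.\<close>
fun completed_at :: "(nat \<Rightarrow> ('w, 'r, 'v, 'c) gst) \<Rightarrow> ('w, 'r) oper \<Rightarrow> nat \<Rightarrow> bool" where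
  "completed_at st (OpW w j) i \<longleftrightarrow> j \<notin> wdone (wrs (st i) w) \<and> j \<in> wdone (wrs (st (Suc i)) w)"
| "completed_at st (OpR r j) i \<longleftrightarrow> rlog (rds (st i) r) j = None \<and> rlog (rds (st (Suc i)) r) j \<noteq> None"

definition precedes :: "(nat \<Rightarrow> ('w, 'r, 'v, 'c) gst) \<Rightarrow> ('w, 'r) oper \<Rightarrow> ('w, 'r) oper \<Rightarrow> bool" where
  "precedes st \<pi>1 \<pi>2 \<longleftrightarrow> (\<exists>i1 i2. completed_at st \<pi>1 i1 \<and> invoked_at st \<pi>2 i2 \<and> i1 < i2)"

definition tag_order :: "(nat \<Rightarrow> ('w::linorder, 'r, 'v, 'c) gst) \<Rightarrow> ('w, 'r) oper \<Rightarrow> ('w, 'r) oper \<Rightarrow> bool" where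
  "tag_order st \<pi> \<phi> \<longleftrightarrow> in_Pi st \<pi> \<and> in_Pi st \<phi> \<and>
     (optag st \<pi> < optag st \<phi> \<or> (optag st \<pi> = optag st \<phi> \<and> is_write \<pi> \<and> is_read \<phi>))"

end

theory Submission
  imports Defs
begin

lemma vd_basic:
  assumes "value_deliver f i t c \<sigma> \<sigma>' os"
  shows "stag \<sigma>' = max (stag \<sigma>) t \<and> sval \<sigma>' = (if stag \<sigma> < t then c else sval \<sigma>) \<and> sRc \<sigma>' = sRc \<sigma>"
  using assms unfolding value_deliver_def by (auto simp: Let_def max_def)

lemma vd_out:
  assumes "value_deliver f i t c \<sigma> \<sigma>' os" "(d, m) \<in> set os"
  shows "(\<exists>rid tr. d = PR (fst rid) \<and> m = ToReader rid t c \<and> (rid, tr) \<in> sRc \<sigma> \<and> tr \<le> t)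
       \<or> (\<exists>j mm. d = PS j \<and> j \<le> f \<and> m = MDMeta mm \<and> (\<forall>rid tr. mm \<noteq> ReadValue rid tr))
       \<or> (m = Ack t \<and> (\<forall>j. d \<noteq> PS j))"
proof -
  obtain xs where xs: "set xs = {x \<in> sRc \<sigma>. snd x \<le> t}" and
    os: "os = concat (map (\<lambda>x. (PR (fst (fst x)), ToReader (fst x) t c)
                                 # md_meta_send f (ReadDisperse t i (fst x))) xs) @ ack_out t"
    using assms(1) unfolding value_deliver_def by blast
  have "(d,m) \<in> set (ack_out t) \<Longrightarrow> m = Ack t \<and> (\<forall>j. d \<noteq> PS j)" by (cases t) auto
  then show ?thesis using assms(2) xs unfolding os
    by (auto simp: md_meta_send_def)
qed

lemma md_basic:
  assumes "meta_deliver k f i mm \<sigma> = (\<sigma>', os)"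
  shows "stag \<sigma>' = stag \<sigma> \<and> sval \<sigma>' = sval \<sigma> \<and>
     sRc \<sigma>' \<subseteq> sRc \<sigma> \<union> {(rid, tr). mm = ReadValue rid tr}"
  using assms by (cases mm) (auto simp: Let_def split: if_splits)

lemma md_out:
  assumes "meta_deliver k f i mm \<sigma> = (\<sigma>', os)" "(d, m) \<in> set os"
  shows "(\<exists>rid tr. d = PR (fst rid) \<and> mm = ReadValue rid tr \<and> tr \<le> stag \<sigma> \<and> m = ToReader rid (stag \<sigma>) (sval \<sigma>))
       \<or> (\<exists>j mm'. d = PS j \<and> j \<le> f \<and> m = MDMeta mm' \<and> (\<forall>rid tr. mm' \<noteq> ReadValue rid tr))"
  using assms
  apply (cases mm)
    apply (auto simp: Let_def md_meta_send_def simp del: upt_Suc split: if_splits)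
  apply (metis atLeastLessThan_iff less_Suc_eq_le)+
  done

definition OKout where
  "OKout n enc G FV Q p m \<sigma>' d m' \<longleftrightarrow> (case m' of
     TagR j t \<Rightarrow> m = TagQ j \<and> d = p \<and> t = stag \<sigma>'
   | MDFull t v \<Rightarrow> FV t v
   | MDCoded t c \<Rightarrow> (\<forall>j. d = PS j \<longrightarrow> (\<exists>v. FV t v \<and> c = enc j v))
   | MDMeta mm \<Rightarrow> (\<forall>rid tr. mm = ReadValue rid tr \<longrightarrow> Q rid tr)
   | Ack t \<Rightarrow> t \<le> stag \<sigma>'
   | ToReader rid t c \<Rightarrow> t \<le> stag \<sigma>' \<and> G t c \<and> Q rid t
   | TagQ _ \<Rightarrow> False)"

lemma srv_recv_inv:
  fixes \<sigma> :: "('w::linorder, 'r, 'v, 'c) sst"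
  assumes sr: "srv_recv n f enc i p m \<sigma> \<sigma>' os"
  and fn: "f < n" and pn: "\<forall>j. p = PS j \<longrightarrow> j < n"
  and G0: "G (stag \<sigma>) (sval \<sigma>)"
  and GF: "\<forall>t v. m = MDFull t v \<longrightarrow> G t (enc i v) \<and> FV t v"
  and GC: "\<forall>t c. m = MDCoded t c \<longrightarrow> G t c"
  and RQ: "\<forall>rid tr. (rid,tr) \<in> sRc \<sigma> \<longrightarrow> Q rid tr"
  and Qm: "\<forall>rid tr t. Q rid tr \<longrightarrow> tr \<le> t \<longrightarrow> Q rid t"
  and MQ: "\<forall>rid tr. m = MDMeta (ReadValue rid tr) \<longrightarrow> Q rid tr"
  shows "stag \<sigma> \<le> stag \<sigma>' \<and> G (stag \<sigma>') (sval \<sigma>') \<and> (\<forall>rid tr. (rid,tr) \<in> sRc \<sigma>' \<longrightarrow> Q rid tr) \<and>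
    (\<forall>d m'. (d, m') \<in> set os \<longrightarrow> (\<forall>j. d = PS j \<longrightarrow> j < n) \<and> OKout n enc G FV Q p m \<sigma>' d m')"
proof (cases m)
  case (TagQ j)
  then show ?thesis using sr G0 RQ pn by (auto simp: srv_recv_def OKout_def)
next
  case (MDFull t v)
  show ?thesis
  proof (cases "i \<le> f \<and> KFull t v \<notin> sseen \<sigma>")
    case True
    then obtain os2 where vd: "value_deliver f i t (enc i v) (\<sigma>\<lparr>sseen := insert (KFull t v) (sseen \<sigma>)\<rparr>) \<sigma>' os2"
      and os: "os = map (\<lambda>j. (PS j, MDFull t v)) [Suc i..<Suc f]
                       @ map (\<lambda>j. (PS j, MDCoded t (enc j v))) [Suc f..<n] @ os2"
      using sr MDFull by (auto simp: srv_recv_def)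
    note b = vd_basic[OF vd]
    have g: "G t (enc i v)" "FV t v" using GF MDFull by auto
    have st: "stag \<sigma> \<le> stag \<sigma>'" "t \<le> stag \<sigma>'" using b by auto
    have G1: "G (stag \<sigma>') (sval \<sigma>')" using b G0 g by (auto simp: max_def)
    have o2: "(\<forall>j. d = PS j \<longrightarrow> j < n) \<and> OKout n enc G FV Q p m \<sigma>' d m'" if "(d, m') \<in> set os2" for d m'
      using vd_out[OF vd that] st g RQ Qm fn unfolding OKout_def by (auto; metis)
    show ?thesis using st G1 b RQ o2 g fn unfolding os by (auto simp: OKout_def)
  next
    case False
    then show ?thesis using sr MDFull G0 RQ by (auto simp: srv_recv_def)
  qed
next
  case (MDCoded t c)
  show ?thesis
  proof (cases "f < i \<and> KCoded t c \<notin> sseen \<sigma>")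
    case True
    then have vd: "value_deliver f i t c (\<sigma>\<lparr>sseen := insert (KCoded t c) (sseen \<sigma>)\<rparr>) \<sigma>' os"
      using sr MDCoded by (auto simp: srv_recv_def)
    note b = vd_basic[OF vd]
    have g: "G t c" using GC MDCoded by auto
    have st: "stag \<sigma> \<le> stag \<sigma>'" "t \<le> stag \<sigma>'" using b by auto
    have G1: "G (stag \<sigma>') (sval \<sigma>')" using b G0 g by (auto simp: max_def)
    have o2: "(\<forall>j. d = PS j \<longrightarrow> j < n) \<and> OKout n enc G FV Q p m \<sigma>' d m'" if "(d, m') \<in> set os" for d m'
      using vd_out[OF vd that] st g RQ Qm fn unfolding OKout_def by (auto; metis)
    show ?thesis using st G1 b RQ o2 by auto
  next
    case False
    then show ?thesis using sr MDCoded G0 RQ by (auto simp: srv_recv_def)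
  qed
next
  case (MDMeta mm)
  show ?thesis
  proof (cases "KMeta mm \<notin> sseen \<sigma>")
    case True
    obtain \<sigma>2 os2 where md: "meta_deliver (n - f) f i mm (\<sigma>\<lparr>sseen := insert (KMeta mm) (sseen \<sigma>)\<rparr>) = (\<sigma>2, os2)"
      by (metis prod.exhaust)
    have s2: "\<sigma>' = \<sigma>2" and os: "os = (if i \<le> f then map (\<lambda>j. (PS j, MDMeta mm)) [Suc i..<Suc f]
                                      @ map (\<lambda>j. (PS j, MDMeta mm)) [Suc f..<n]
                         else []) @ os2"
      using sr MDMeta True md by (auto simp: srv_recv_def)
    note b = md_basic[OF md]
    have st: "stag \<sigma>' = stag \<sigma>" "sval \<sigma>' = sval \<sigma>" using b s2 by auto
    have rc: "(\<forall>rid tr. (rid,tr) \<in> sRc \<sigma>' \<longrightarrow> Q rid tr)" using b s2 RQ MQ MDMeta by auto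
    have o2: "(\<forall>j. d = PS j \<longrightarrow> j < n) \<and> OKout n enc G FV Q p m \<sigma>' d m'" if "(d, m') \<in> set os2" for d m'
      using md_out[OF md that] st G0 RQ Qm fn MQ MDMeta unfolding OKout_def by (auto; metis)
    have o1: "(\<forall>j. d = PS j \<longrightarrow> j < n) \<and> OKout n enc G FV Q p m \<sigma>' d m'"
      if "(d, m') \<in> set os" "(d, m') \<notin> set os2" for d m'
      using that MQ MDMeta fn unfolding os by (auto simp: OKout_def split: if_splits)
    show ?thesis using st G0 rc o1 o2 by (metis order_refl)
  next
    case False
    then show ?thesis using sr MDMeta G0 RQ by (auto simp: srv_recv_def)
  qed
qed (use sr G0 RQ in \<open>auto simp: srv_recv_def\<close>)



lemma srv_recv_mono:
  assumes "srv_recv n f enc i p m \<sigma> \<sigma>' os"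
  shows "stag \<sigma> \<le> stag \<sigma>'"
proof (cases m)
  case (MDFull t v) then show ?thesis using assms
    by (auto simp: srv_recv_def dest!: vd_basic split: if_splits)
next
  case (MDCoded t v) then show ?thesis using assms
    by (auto simp: srv_recv_def dest!: vd_basic split: if_splits)
next
  case (MDMeta mm)
  obtain \<sigma>2 os2 where md: "meta_deliver (n - f) f i mm (\<sigma>\<lparr>sseen := insert (KMeta mm) (sseen \<sigma>)\<rparr>) = (\<sigma>2, os2)"
    by (metis prod.exhaust)
  show ?thesis using assms MDMeta md_basic[OF md]
    by (auto simp: srv_recv_def md split: if_splits)
qed (use assms in \<open>auto simp: srv_recv_def\<close>)

lemma wr_recv_cnt:
  "wr_recv n f w p m \<sigma> = (\<sigma>', os) \<Longrightarrow> wcnt \<sigma>' = wcnt \<sigma>"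
  by (cases "(n,f,w,p,m,\<sigma>)" rule: wr_recv.cases) (auto simp: Let_def split: wphase.splits if_splits)

lemma rd_recv_cnt:
  "rd_recv n f dec r p m \<sigma> \<sigma>' os \<Longrightarrow> rcnt \<sigma>' = rcnt \<sigma>"
  unfolding rd_recv_def
  by (auto simp: Let_def split: proc.splits msg.splits rphase.splits if_splits)

lemma step_cases:
  assumes "step n f enc dec s a s'"
  obtains (Skip) "s' = s"
  | (Send) p where "p \<notin> crashed s" "outb s p \<noteq> []"
       "s' = s\<lparr>net := net s + {# (p, fst (hd (outb s p)), snd (hd (outb s p))) #},
                outb := (outb s)(p := tl (outb s p))\<rparr>"
  | (Crash) p where "s' = s\<lparr>crashed := insert p (crashed s)\<rparr>"
  | (InvW) w v where "PW w \<notin> crashed s" "wph (wrs s w) = WIdle"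
       "s' = s\<lparr>wrs := (wrs s)(w := (wrs s w)\<lparr>wph := WGet (Suc (wcnt (wrs s w))) v {}, wcnt := Suc (wcnt (wrs s w))\<rparr>),
                 outb := (outb s)(PW w := outb s (PW w) @ map (\<lambda>i. (PS i, TagQ (Suc (wcnt (wrs s w))))) [0..<n])\<rparr>"
  | (InvR) r where "PR r \<notin> crashed s" "rph (rds s r) = RIdle"
       "s' = s\<lparr>rds := (rds s)(r := (rds s r)\<lparr>rph := RGet (Suc (rcnt (rds s r))) {}, rcnt := Suc (rcnt (rds s r))\<rparr>),
                 outb := (outb s)(PR r := outb s (PR r) @ map (\<lambda>i. (PS i, TagQ (Suc (rcnt (rds s r))))) [0..<n])\<rparr>"
  | (DS) p i m \<sigma>' os where "(p, PS i, m) \<in># net s" "srv_recv n f enc i p m (srv s i) \<sigma>' os"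
       "s' = s\<lparr>net := net s - {# (p, PS i, m) #}, srv := (srv s)(i := \<sigma>'), outb := (outb s)(PS i := outb s (PS i) @ os)\<rparr>"
  | (DW) p w m \<sigma>' os where "(p, PW w, m) \<in># net s" "wr_recv n f w p m (wrs s w) = (\<sigma>', os)"
       "s' = s\<lparr>net := net s - {# (p, PW w, m) #}, wrs := (wrs s)(w := \<sigma>'), outb := (outb s)(PW w := outb s (PW w) @ os)\<rparr>"
  | (DR) p r m \<sigma>' os where "(p, PR r, m) \<in># net s" "rd_recv n f dec r p m (rds s r) \<sigma>' os"
       "s' = s\<lparr>net := net s - {# (p, PR r, m) #}, rds := (rds s)(r := \<sigma>'), outb := (outb s)(PR r := outb s (PR r) @ os)\<rparr>"
proof (cases a)
  case (Deliver pk)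
  obtain p q m where pk: "pk = (p, q, m)" by (metis prod.exhaust)
  show ?thesis
  proof (cases q)
    case (PW w)
    obtain \<sigma>' os where "wr_recv n f w p m (wrs s w) = (\<sigma>', os)" by (metis prod.exhaust)
    then show ?thesis using assms Deliver pk PW DW by (auto simp: step_def Let_def)
  next
    case (PR r) then show ?thesis using assms Deliver pk DR by (auto simp: step_def Let_def)
  next
    case (PS i) then show ?thesis using assms Deliver pk DS by (auto simp: step_def Let_def)
  qed
qed (use assms in \<open>auto simp: step_def Let_def\<close>)

lemma step_mono:
  assumes "step n f enc dec s a s'"
  shows "stag (srv s i) \<le> stag (srv s' i)" "wcnt (wrs s w) \<le> wcnt (wrs s' w)"
        "rcnt (rds s r) \<le> rcnt (rds s' r)"
  using assms by (cases rule: step_cases; auto dest: srv_recv_mono wr_recv_cnt rd_recv_cnt)+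


lemma tag_less_succ: "T \<le> tm \<Longrightarrow> T < Tag (Suc (tz tm)) (w::'w::linorder)"
  by (cases T; cases tm) (auto simp: less_tag_def)

lemma quorum_inter:
  assumes "A \<subseteq> {..<n}" "n - f \<le> card A" "B \<subseteq> {..<(n::nat)}" "n < 2 * card B" "2 * f + 1 \<le> n"
  shows "A \<inter> B \<noteq> {}"
proof
  assume e: "A \<inter> B = {}"
  have fin: "finite A" "finite B" using assms finite_subset by blast+
  have "card (A \<union> B) = card A + card B" using e fin card_Un_disjoint by blast
  moreover have "card (A \<union> B) \<le> n" using assms card_mono[of "{..<n}" "A \<union> B"] by auto
  ultimately show False using assms by linarith
qed

locale soda_ex =
  fixes n f :: nat and enc :: "nat \<Rightarrow> 'v \<Rightarrow> 'c" and dec :: "(nat \<Rightarrow> 'c option) \<Rightarrow> 'v" and v0 :: 'v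
    and st :: "nat \<Rightarrow> ('w::linorder, 'r, 'v, 'c) gst" and act :: "nat \<Rightarrow> ('w, 'r, 'v, 'c) action"
  assumes f_pos: "1 \<le> f" and f_bound: "2 * f + 1 \<le> n"
    and exec: "soda_execution n f enc dec v0 st act"
begin

lemma stepi: "step n f enc dec (st i) (act i) (st (Suc i))"
  using exec by (simp add: soda_execution_def)

lemma st0: "st 0 = init_state n enc v0"
  using exec by (simp add: soda_execution_def)

lemma stag_mono: "i \<le> j \<Longrightarrow> stag (srv (st i) s) \<le> stag (srv (st j) s)"
  using lift_Suc_mono_le[of "\<lambda>i. stag (srv (st i) s)"] step_mono(1)[OF stepi] by blast

lemma wcnt_mono: "i \<le> j \<Longrightarrow> wcnt (wrs (st i) w) \<le> wcnt (wrs (st j) w)"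
  using lift_Suc_mono_le[of "\<lambda>i. wcnt (wrs (st i) w)"] step_mono(2)[OF stepi] by blast

lemma rcnt_mono: "i \<le> j \<Longrightarrow> rcnt (rds (st i) r) \<le> rcnt (rds (st j) r)"
  using lift_Suc_mono_le[of "\<lambda>i. rcnt (rds (st i) r)"] step_mono(3)[OF stepi] by blast

definition quorum :: "(nat \<Rightarrow> ('w, 'r, 'v, 'c) sst) \<Rightarrow> 'w tag \<Rightarrow> bool" where
  "quorum S T \<longleftrightarrow> n - f \<le> card {i. i < n \<and> T \<le> stag (S i)}"

definition Qall :: "'r readid \<Rightarrow> 'w tag \<Rightarrow> bool" where
  "Qall rid t \<longleftrightarrow> (\<forall>i0 T. rcnt (rds (st i0) (fst rid)) < snd rid \<longrightarrow> quorum (srv (st i0)) T \<longrightarrow> T \<le> t)"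

definition QW :: "'w \<Rightarrow> nat \<Rightarrow> 'w tag \<Rightarrow> bool" where
  "QW w j t \<longleftrightarrow> (\<forall>i0 T. wcnt (wrs (st i0) w) < j \<longrightarrow> quorum (srv (st i0)) T \<longrightarrow> T < t)"

definition TRw :: "'w \<Rightarrow> nat \<Rightarrow> nat \<Rightarrow> 'w tag \<Rightarrow> bool" where
  "TRw w j s t \<longleftrightarrow> (\<forall>i0. wcnt (wrs (st i0) w) < j \<longrightarrow> stag (srv (st i0) s) \<le> t)"

definition TRr :: "'r \<Rightarrow> nat \<Rightarrow> nat \<Rightarrow> 'w tag \<Rightarrow> bool" where
  "TRr r j s t \<longleftrightarrow> (\<forall>i0. rcnt (rds (st i0) r) < j \<longrightarrow> stag (srv (st i0) s) \<le> t)"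

definition okc :: "('w \<Rightarrow> ('w, 'v) wst) \<Rightarrow> 'w tag \<Rightarrow> nat \<Rightarrow> 'c \<Rightarrow> bool" where
  "okc W t i c \<longleftrightarrow> (t = T0 \<and> c = enc i v0) \<or> (\<exists>w j v. wlog (W w) j = Some (t, v) \<and> c = enc i v)"

definition PKT :: "(nat \<Rightarrow> ('w, 'r, 'v, 'c) sst) \<Rightarrow> ('w \<Rightarrow> ('w, 'v) wst) \<Rightarrow> ('r \<Rightarrow> ('w, 'v, 'c) rst)
   \<Rightarrow> ('w, 'r) proc \<Rightarrow> ('w, 'r) proc \<Rightarrow> ('w, 'r, 'v, 'c) msg \<Rightarrow> bool" where
  "PKT S W R p q m \<longleftrightarrow>
   (\<forall>i. p = PS i \<longrightarrow> i < n) \<and> (\<forall>i. q = PS i \<longrightarrow> i < n) \<and>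
   (case m of
      TagQ j \<Rightarrow> (\<forall>w. p = PW w \<longrightarrow> j \<le> wcnt (W w)) \<and> (\<forall>r. p = PR r \<longrightarrow> j \<le> rcnt (R r))
    | TagR j t \<Rightarrow> (\<forall>sv. p = PS sv \<longrightarrow> (\<forall>w. q = PW w \<longrightarrow> TRw w j sv t) \<and> (\<forall>r. q = PR r \<longrightarrow> TRr r j sv t))
    | MDFull t v \<Rightarrow> (\<exists>w j. wlog (W w) j = Some (t, v))
    | MDCoded t c \<Rightarrow> (\<forall>i. q = PS i \<longrightarrow> (\<exists>w j v. wlog (W w) j = Some (t, v) \<and> c = enc i v))
    | MDMeta mm \<Rightarrow> (\<forall>rid tr. mm = ReadValue rid tr \<longrightarrow> Qall rid tr)
    | Ack t \<Rightarrow> (\<forall>sv. p = PS sv \<longrightarrow> t \<le> stag (S sv))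
    | ToReader rid t c \<Rightarrow> (\<forall>sv. p = PS sv \<longrightarrow> t \<le> stag (S sv) \<and> okc W t sv c) \<and> Qall rid t)"

definition SP :: "(nat \<Rightarrow> ('w, 'r, 'v, 'c) sst) \<Rightarrow> ('w \<Rightarrow> ('w, 'v) wst) \<Rightarrow> nat \<Rightarrow> bool" where
  "SP S W i \<longleftrightarrow> okc W (stag (S i)) i (sval (S i)) \<and> (\<forall>rid tr. (rid, tr) \<in> sRc (S i) \<longrightarrow> Qall rid tr)"

definition WP :: "(nat \<Rightarrow> ('w, 'r, 'v, 'c) sst) \<Rightarrow> ('w, 'v) wst \<Rightarrow> 'w \<Rightarrow> bool" where
  "WP S \<sigma> w \<longleftrightarrow>
   (\<forall>j t v. wlog \<sigma> j = Some (t, v) \<longrightarrow> (\<exists>z. t = Tag z w) \<and> 1 \<le> j \<and> j \<le> wcnt \<sigma> \<and> QW w j t) \<and>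
   (\<forall>j v R. wph \<sigma> = WGet j v R \<longrightarrow> j = wcnt \<sigma> \<and> 1 \<le> j \<and> wlog \<sigma> j = None \<and> finite R \<and>
       (\<forall>sv t. (sv, t) \<in> R \<longrightarrow> sv < n \<and> TRw w j sv t)) \<and>
   (\<forall>j tw A. wph \<sigma> = WPut j tw A \<longrightarrow> j = wcnt \<sigma> \<and> (\<exists>v. wlog \<sigma> j = Some (tw, v)) \<and>
       (\<forall>sv\<in>A. sv < n \<and> tw \<le> stag (S sv))) \<and>
   (\<forall>j. 1 \<le> j \<and> j \<le> wcnt \<sigma> \<and> (j < wcnt \<sigma> \<or> wph \<sigma> = WIdle) \<longrightarrow> j \<in> wdone \<sigma>) \<and>
   (\<forall>j\<in>wdone \<sigma>. \<exists>t v. wlog \<sigma> j = Some (t, v) \<and> quorum S t)"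

definition RP :: "(nat \<Rightarrow> ('w, 'r, 'v, 'c) sst) \<Rightarrow> ('w \<Rightarrow> ('w, 'v) wst) \<Rightarrow> ('w, 'v, 'c) rst \<Rightarrow> 'r \<Rightarrow> bool" where
  "RP S W \<sigma> r \<longleftrightarrow>
   (\<forall>j t v. rlog \<sigma> j = Some (t, v) \<longrightarrow> 1 \<le> j \<and> j \<le> rcnt \<sigma> \<and> Qall (r, j) t \<and> quorum S t \<and>
      (\<exists>X g. X \<subseteq> {..<n} \<and> card X = n - f \<and> (\<forall>x\<in>X. okc W t x (g x)) \<and>
          v = dec (\<lambda>x. if x \<in> X then Some (g x) else None))) \<and>
   (\<forall>j R. rph \<sigma> = RGet j R \<longrightarrow> j = rcnt \<sigma> \<and> 1 \<le> j \<and> rlog \<sigma> j = None \<and> finite R \<and>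
       (\<forall>sv t. (sv, t) \<in> R \<longrightarrow> sv < n \<and> TRr r j sv t)) \<and>
   (\<forall>j tr P. rph \<sigma> = RData j tr P \<longrightarrow> j = rcnt \<sigma> \<and> 1 \<le> j \<and> rlog \<sigma> j = None \<and>
       (\<forall>sv t c. (sv, t, c) \<in> P \<longrightarrow> sv < n \<and> t \<le> stag (S sv) \<and> okc W t sv c \<and> Qall (r, j) t))"

definition Inv :: "('w, 'r, 'v, 'c) gst \<Rightarrow> bool" where
  "Inv s \<longleftrightarrow> (\<forall>p q m. (p, q, m) \<in># net s \<longrightarrow> PKT (srv s) (wrs s) (rds s) p q m) \<and>
     (\<forall>p q m. (q, m) \<in> set (outb s p) \<longrightarrow> PKT (srv s) (wrs s) (rds s) p q m) \<and>
     (\<forall>i. SP (srv s) (wrs s) i) \<and> (\<forall>w. WP (srv s) (wrs s w) w) \<and> (\<forall>r. RP (srv s) (wrs s) (rds s r) r)"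

definition grows where
  "grows S W R S' W' R' \<longleftrightarrow> (\<forall>i. stag (S i) \<le> stag (S' i)) \<and>
     (\<forall>w j x. wlog (W w) j = Some x \<longrightarrow> wlog (W' w) j = Some x) \<and>
     (\<forall>w. wcnt (W w) \<le> wcnt (W' w)) \<and> (\<forall>r. rcnt (R r) \<le> rcnt (R' r))"

lemma quorum_grow: "quorum S T \<Longrightarrow> \<forall>i. stag (S i) \<le> stag (S' i) \<Longrightarrow> quorum S' T"
  unfolding quorum_def
proof -
  assume q: "n - f \<le> card {i. i < n \<and> T \<le> stag (S i)}" and m: "\<forall>i. stag (S i) \<le> stag (S' i)"
  have "{i. i < n \<and> T \<le> stag (S i)} \<subseteq> {i. i < n \<and> T \<le> stag (S' i)}"
    using m order_trans by blast
  then have "card {i. i < n \<and> T \<le> stag (S i)} \<le> card {i. i < n \<and> T \<le> stag (S' i)}"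
    by (rule card_mono[rotated]) auto
  then show "n - f \<le> card {i. i < n \<and> T \<le> stag (S' i)}" using q by linarith
qed

lemma okc_grow: "okc W t i c \<Longrightarrow> grows S W R S' W' R' \<Longrightarrow> okc W' t i c"
  unfolding okc_def grows_def by blast

lemma PKT_grow:
  assumes p: "PKT S W R p q m" and g: "grows S W R S' W' R'"
  shows "PKT S' W' R' p q m"
proof -
  have g1: "\<And>i. stag (S i) \<le> stag (S' i)" and g2: "\<And>w j x. wlog (W w) j = Some x \<Longrightarrow> wlog (W' w) j = Some x"
    and g3: "\<And>w. wcnt (W w) \<le> wcnt (W' w)" and g4: "\<And>r. rcnt (R r) \<le> rcnt (R' r)"
    using g unfolding grows_def by blast+
  have ok: "\<And>t i c. okc W t i c \<Longrightarrow> okc W' t i c" using okc_grow[OF _ g] by blast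
  show ?thesis
  proof (cases m)
    case (TagQ j) then show ?thesis using p g3 g4 unfolding PKT_def by (auto intro: le_trans)
  next
    case (MDFull t v) then show ?thesis using p g2 unfolding PKT_def by (simp; metis)
  next
    case (MDCoded t c) then show ?thesis using p g2 unfolding PKT_def by (simp; metis)
  next
    case (Ack t) then show ?thesis using p g1 unfolding PKT_def by (auto intro: order_trans)
  next
    case (ToReader rid t c) then show ?thesis using p g1 ok unfolding PKT_def by (auto intro: order_trans)
  qed (use p in \<open>auto simp: PKT_def\<close>)
qed

lemma SP_grow: "SP S W i \<Longrightarrow> grows S W R S' W' R' \<Longrightarrow> S' i = S i \<Longrightarrow> SP S' W' i"
  unfolding SP_def using okc_grow by metis

lemma WP_grow:
  assumes w: "WP S \<sigma> w" and g: "grows S W R S' W' R'"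
  shows "WP S' \<sigma> w"
proof -
  have g1: "\<forall>i. stag (S i) \<le> stag (S' i)" using g unfolding grows_def by blast
  have q: "\<And>T. quorum S T \<Longrightarrow> quorum S' T" using quorum_grow g1 by blast
  have t: "\<And>tw sv. tw \<le> stag (S sv) \<Longrightarrow> tw \<le> stag (S' sv)" using g1 order_trans by blast
  show ?thesis using w unfolding WP_def
    apply (elim conjE, intro conjI)
        apply assumption
       apply assumption
      apply (metis t)
     apply assumption
    apply (metis q)
    done
qed

lemma RP_grow:
  assumes w: "RP S W \<sigma> r" and g: "grows S W R S' W' R'"
  shows "RP S' W' \<sigma> r"
proof -
  have g1: "\<forall>i. stag (S i) \<le> stag (S' i)" using g unfolding grows_def by blast
  have q: "\<And>T. quorum S T \<Longrightarrow> quorum S' T" using quorum_grow g1 by blast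
  have t: "\<And>tw sv. tw \<le> stag (S sv) \<Longrightarrow> tw \<le> stag (S' sv)" using g1 order_trans by blast
  have ok: "\<And>t i c. okc W t i c \<Longrightarrow> okc W' t i c" using okc_grow[OF _ g] by blast
  show ?thesis using w unfolding RP_def
    apply (elim conjE, intro conjI)
      apply (intro allI impI)
      subgoal premises pr for j t v
      proof -
        have "1 \<le> j \<and> j \<le> rcnt \<sigma> \<and> Qall (r, j) t \<and> quorum S t \<and>
          (\<exists>X g. X \<subseteq> {..<n} \<and> card X = n - f \<and> (\<forall>x\<in>X. okc W t x (g x)) \<and>
          v = dec (\<lambda>x. if x \<in> X then Some (g x) else None))" using pr by blast
        then obtain X g where a: "1 \<le> j" "j \<le> rcnt \<sigma>" "Qall (r, j) t" "quorum S t" "X \<subseteq> {..<n}" "card X = n - f"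
          "\<forall>x\<in>X. okc W t x (g x)" "v = dec (\<lambda>x. if x \<in> X then Some (g x) else None)" by blast
        have "\<forall>x\<in>X. okc W' t x (g x)" using a(7) ok by blast
        then show ?thesis using a q by blast
      qed
     apply assumption
    apply (metis t ok)
    done
qed

lemma Qall_mono: "Qall rid tr \<Longrightarrow> tr \<le> t \<Longrightarrow> Qall rid t"
  unfolding Qall_def using order_trans by blast

lemma Inv0: "Inv (st 0)"
  by (simp add: st0 Inv_def init_state_def SP_def okc_def WP_def RP_def)

end

context soda_ex begin

lemma inv_send:
  assumes I: "Inv s" and ne: "outb s p \<noteq> []"
    and s': "s' = s\<lparr>net := net s + {# (p, fst (hd (outb s p)), snd (hd (outb s p))) #},
                outb := (outb s)(p := tl (outb s p))\<rparr>"
  shows "Inv s'"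
proof -
  have h: "(fst (hd (outb s p)), snd (hd (outb s p))) \<in> set (outb s p)" using ne by simp
  have t: "\<And>x. x \<in> set (tl (outb s p)) \<Longrightarrow> x \<in> set (outb s p)" by (meson list.set_sel(2) ne)
  show ?thesis using I h t unfolding Inv_def s' by (auto split: if_splits)
qed

lemma inv_crash:
  assumes I: "Inv s" and s': "s' = s\<lparr>crashed := X\<rparr>"
  shows "Inv s'"
  using I unfolding Inv_def s' by auto

lemma inv_invw:
  assumes I: "Inv s" and idle: "wph (wrs s w) = WIdle"
    and s': "s' = s\<lparr>wrs := (wrs s)(w := (wrs s w)\<lparr>wph := WGet (Suc (wcnt (wrs s w))) v {}, wcnt := Suc (wcnt (wrs s w))\<rparr>),
                 outb := (outb s)(PW w := outb s (PW w) @ map (\<lambda>i. (PS i, TagQ (Suc (wcnt (wrs s w))))) [0..<n])\<rparr>"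
  shows "Inv s'"
proof -
  let ?\<sigma> = "wrs s w"
  let ?\<sigma>' = "?\<sigma>\<lparr>wph := WGet (Suc (wcnt ?\<sigma>)) v {}, wcnt := Suc (wcnt ?\<sigma>)\<rparr>"
  have g: "grows (srv s) (wrs s) (rds s) (srv s) (wrs s') (rds s)"
    unfolding grows_def s' by auto
  have Ip: "\<And>p q m. (p, q, m) \<in># net s \<Longrightarrow> PKT (srv s) (wrs s) (rds s) p q m"
     "\<And>p q m. (q, m) \<in> set (outb s p) \<Longrightarrow> PKT (srv s) (wrs s) (rds s) p q m"
     and Is: "\<And>i. SP (srv s) (wrs s) i" and Iw: "\<And>w. WP (srv s) (wrs s w) w"
     and Ir: "\<And>r. RP (srv s) (wrs s) (rds s r) r"
    using I unfolding Inv_def by blast+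
  have new: "PKT (srv s) (wrs s') (rds s) (PW w) (PS i) (TagQ (Suc (wcnt ?\<sigma>)))" if "i < n" for i
    using that unfolding PKT_def s' by simp
  have wp: "WP (srv s) ?\<sigma>' w"
  proof -
    have L: "\<And>j t v. wlog ?\<sigma> j = Some (t, v) \<Longrightarrow> (\<exists>z. t = Tag z w) \<and> 1 \<le> j \<and> j \<le> wcnt ?\<sigma> \<and> QW w j t"
      and Dn: "\<And>j. 1 \<le> j \<Longrightarrow> j \<le> wcnt ?\<sigma> \<Longrightarrow> (j < wcnt ?\<sigma> \<or> wph ?\<sigma> = WIdle) \<Longrightarrow> j \<in> wdone ?\<sigma>"
      and D: "\<forall>j\<in>wdone ?\<sigma>. \<exists>t v. wlog ?\<sigma> j = Some (t, v) \<and> quorum (srv s) t"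
      using Iw[of w] unfolding WP_def by blast+
    have N: "wlog ?\<sigma> (Suc (wcnt ?\<sigma>)) = None"
    proof (rule ccontr)
      assume "wlog ?\<sigma> (Suc (wcnt ?\<sigma>)) \<noteq> None"
      then obtain t v where "wlog ?\<sigma> (Suc (wcnt ?\<sigma>)) = Some (t, v)" by auto
      then show False using L by fastforce
    qed
    show ?thesis unfolding WP_def
      apply (intro conjI)
      subgoal using L by (simp add: le_SucI)
      subgoal using N by auto
      subgoal by simp
      subgoal using Dn idle by (simp add: less_Suc_eq_le)
      subgoal using D by simp
      done
  qed
  have "Inv s'"
    unfolding Inv_def
  proof (intro conjI allI impI)
    fix p q m assume "(p, q, m) \<in># net s'"
    then show "PKT (srv s') (wrs s') (rds s') p q m" using Ip(1) PKT_grow[OF _ g] unfolding s' by simp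
  next
    fix p q m assume a: "(q, m) \<in> set (outb s' p)"
    show "PKT (srv s') (wrs s') (rds s') p q m"
    proof (cases "p = PW w \<and> (q, m) \<notin> set (outb s p)")
      case True then show ?thesis using a new unfolding s' by auto
    next
      case False then have "(q, m) \<in> set (outb s p)" using a unfolding s' by (auto split: if_splits)
      then show ?thesis using Ip(2) PKT_grow[OF _ g] unfolding s' by simp
    qed
  next
    fix i show "SP (srv s') (wrs s') i" using SP_grow[OF Is g] unfolding s' by simp
  next
    fix w' show "WP (srv s') (wrs s' w') w'"
      using Iw[of w'] wp unfolding s' by auto
  next
    fix r show "RP (srv s') (wrs s') (rds s' r) r" using RP_grow[OF Ir g] unfolding s' by simp
  qed
  then show ?thesis .
qed


lemma inv_invr:
  assumes I: "Inv s" and idle: "rph (rds s r) = RIdle"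
    and s': "s' = s\<lparr>rds := (rds s)(r := (rds s r)\<lparr>rph := RGet (Suc (rcnt (rds s r))) {}, rcnt := Suc (rcnt (rds s r))\<rparr>),
                 outb := (outb s)(PR r := outb s (PR r) @ map (\<lambda>i. (PS i, TagQ (Suc (rcnt (rds s r))))) [0..<n])\<rparr>"
  shows "Inv s'"
proof -
  let ?\<sigma> = "rds s r"
  let ?\<sigma>' = "?\<sigma>\<lparr>rph := RGet (Suc (rcnt ?\<sigma>)) {}, rcnt := Suc (rcnt ?\<sigma>)\<rparr>"
  have g: "grows (srv s) (wrs s) (rds s) (srv s) (wrs s) (rds s')"
    unfolding grows_def s' by auto
  have Ip: "\<And>p q m. (p, q, m) \<in># net s \<Longrightarrow> PKT (srv s) (wrs s) (rds s) p q m"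
     "\<And>p q m. (q, m) \<in> set (outb s p) \<Longrightarrow> PKT (srv s) (wrs s) (rds s) p q m"
     and Is: "\<And>i. SP (srv s) (wrs s) i" and Iw: "\<And>w. WP (srv s) (wrs s w) w"
     and Ir: "\<And>r. RP (srv s) (wrs s) (rds s r) r"
    using I unfolding Inv_def by blast+
  have new: "PKT (srv s) (wrs s) (rds s') (PR r) (PS i) (TagQ (Suc (rcnt ?\<sigma>)))" if "i < n" for i
    using that unfolding PKT_def s' by simp
  have rp: "RP (srv s) (wrs s) ?\<sigma>' r"
  proof -
    have L: "\<And>j t v. rlog ?\<sigma> j = Some (t, v) \<Longrightarrow> 1 \<le> j \<and> j \<le> rcnt ?\<sigma> \<and> Qall (r, j) t \<and> quorum (srv s) t \<and>
      (\<exists>X g. X \<subseteq> {..<n} \<and> card X = n - f \<and> (\<forall>x\<in>X. okc (wrs s) t x (g x)) \<and>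
          v = dec (\<lambda>x. if x \<in> X then Some (g x) else None))"
      using Ir[of r] unfolding RP_def by blast+
    have N: "rlog ?\<sigma> (Suc (rcnt ?\<sigma>)) = None"
    proof (rule ccontr)
      assume "rlog ?\<sigma> (Suc (rcnt ?\<sigma>)) \<noteq> None"
      then obtain t v where "rlog ?\<sigma> (Suc (rcnt ?\<sigma>)) = Some (t, v)" by auto
      then show False using L by fastforce
    qed
    show ?thesis unfolding RP_def
      apply (intro conjI)
      subgoal using L by (simp add: le_SucI)
      subgoal using N by auto
      subgoal by simp
      done
  qed
  have "Inv s'"
    unfolding Inv_def
  proof (intro conjI allI impI)
    fix p q m assume "(p, q, m) \<in># net s'"
    then show "PKT (srv s') (wrs s') (rds s') p q m" using Ip(1) PKT_grow[OF _ g] unfolding s' by simp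
  next
    fix p q m assume a: "(q, m) \<in> set (outb s' p)"
    show "PKT (srv s') (wrs s') (rds s') p q m"
    proof (cases "p = PR r \<and> (q, m) \<notin> set (outb s p)")
      case True then show ?thesis using a new unfolding s' by auto
    next
      case False then have "(q, m) \<in> set (outb s p)" using a unfolding s' by (auto split: if_splits)
      then show ?thesis using Ip(2) PKT_grow[OF _ g] unfolding s' by simp
    qed
  next
    fix i show "SP (srv s') (wrs s') i" using SP_grow[OF Is g] unfolding s' by simp
  next
    fix w' show "WP (srv s') (wrs s' w') w'"
      using Iw[of w'] unfolding s' by auto
  next
    fix r' show "RP (srv s') (wrs s') (rds s' r') r'"
      using RP_grow[OF Ir[of r'] g] rp unfolding s' by auto
  qed
  then show ?thesis .
qed

lemma TR_new_w:
  assumes "j \<le> wcnt (wrs (st k) w)" "stag (srv (st k) i) \<le> t"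
  shows "TRw w j i t"
  unfolding TRw_def
proof (intro allI impI)
  fix i0 assume a: "wcnt (wrs (st i0) w) < j"
  have "i0 \<le> k"
  proof (rule ccontr)
    assume "\<not> i0 \<le> k" then have "wcnt (wrs (st k) w) \<le> wcnt (wrs (st i0) w)" using wcnt_mono by simp
    then show False using a assms by linarith
  qed
  then show "stag (srv (st i0) i) \<le> t" using stag_mono assms(2) order_trans by blast
qed

lemma TR_new_r:
  assumes "j \<le> rcnt (rds (st k) r)" "stag (srv (st k) i) \<le> t"
  shows "TRr r j i t"
  unfolding TRr_def
proof (intro allI impI)
  fix i0 assume a: "rcnt (rds (st i0) r) < j"
  have "i0 \<le> k"
  proof (rule ccontr)
    assume "\<not> i0 \<le> k" then have "rcnt (rds (st k) r) \<le> rcnt (rds (st i0) r)" using rcnt_mono by simp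
    then show False using a assms by linarith
  qed
  then show "stag (srv (st i0) i) \<le> t" using stag_mono assms(2) order_trans by blast
qed

lemma inv_ds:
  assumes I: "Inv (st k)" and pk: "(p, PS i, m) \<in># net (st k)"
    and sr: "srv_recv n f enc i p m (srv (st k) i) \<sigma>' os"
    and s': "s' = (st k)\<lparr>net := net (st k) - {# (p, PS i, m) #}, srv := (srv (st k))(i := \<sigma>'),
                outb := (outb (st k))(PS i := outb (st k) (PS i) @ os)\<rparr>"
  shows "Inv s'"
proof -
  define s where "s = st k"
  have Ip: "\<And>p q m. (p, q, m) \<in># net s \<Longrightarrow> PKT (srv s) (wrs s) (rds s) p q m"
     "\<And>p q m. (q, m) \<in> set (outb s p) \<Longrightarrow> PKT (srv s) (wrs s) (rds s) p q m"
     and Is: "\<And>i. SP (srv s) (wrs s) i" and Iw: "\<And>w. WP (srv s) (wrs s w) w"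
     and Ir: "\<And>r. RP (srv s) (wrs s) (rds s r) r"
    using I unfolding Inv_def s_def by blast+
  have P: "PKT (srv s) (wrs s) (rds s) p (PS i) m" using Ip(1) pk unfolding s_def by blast
  have fn: "f < n" using f_bound by linarith
  have pn: "\<forall>j. p = PS j \<longrightarrow> j < n" and iN: "i < n" using P unfolding PKT_def by auto
  let ?G = "\<lambda>t c. okc (wrs s) t i c"
  let ?FV = "\<lambda>t v. \<exists>w j. wlog (wrs s w) j = Some (t, v)"
  have G0: "?G (stag (srv s i)) (sval (srv s i))" using Is[of i] unfolding SP_def by blast
  have GF: "\<forall>t v. m = MDFull t v \<longrightarrow> ?G t (enc i v) \<and> ?FV t v" using P unfolding PKT_def okc_def by (auto; blast)
  have GC: "\<forall>t c. m = MDCoded t c \<longrightarrow> ?G t c" using P unfolding PKT_def okc_def by auto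
  have RQ: "\<forall>rid tr. (rid,tr) \<in> sRc (srv s i) \<longrightarrow> Qall rid tr" using Is[of i] unfolding SP_def by blast
  have Qm: "\<forall>rid tr t. Qall rid tr \<longrightarrow> tr \<le> t \<longrightarrow> Qall rid t" using Qall_mono by blast
  have MQ: "\<forall>rid tr. m = MDMeta (ReadValue rid tr) \<longrightarrow> Qall rid tr" using P unfolding PKT_def by auto
  have R: "stag (srv s i) \<le> stag \<sigma>' \<and> ?G (stag \<sigma>') (sval \<sigma>') \<and> (\<forall>rid tr. (rid,tr) \<in> sRc \<sigma>' \<longrightarrow> Qall rid tr) \<and>
    (\<forall>d m'. (d, m') \<in> set os \<longrightarrow> (\<forall>j. d = PS j \<longrightarrow> j < n) \<and> OKout n enc ?G ?FV Qall p m \<sigma>' d m')"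
    using srv_recv_inv[OF sr[folded s_def] fn pn G0 GF GC RQ Qm MQ] .
  have g: "grows (srv s) (wrs s) (rds s) (srv s') (wrs s') (rds s')"
    using R unfolding grows_def s' s_def by auto
  have ws: "wrs s' = wrs s" "rds s' = rds s" "srv s' i = \<sigma>'" unfolding s' s_def by auto
  have newp: "PKT (srv s') (wrs s') (rds s') (PS i) d m'" if a: "(d, m') \<in> set os" for d m'
  proof -
    have dn: "\<forall>j. d = PS j \<longrightarrow> j < n" and ok: "OKout n enc ?G ?FV Qall p m \<sigma>' d m'" using R a by blast+
    show ?thesis
    proof (cases m')
      case (TagR j t)
      then have m: "m = TagQ j" "d = p" "t = stag \<sigma>'" using ok unfolding OKout_def by auto
      have tt: "stag (srv (st k) i) \<le> t" using R m unfolding s_def by auto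
      have "\<forall>w. p = PW w \<longrightarrow> TRw w j i t" using P m TR_new_w[OF _ tt] unfolding PKT_def s_def by auto
      moreover have "\<forall>r. p = PR r \<longrightarrow> TRr r j i t" using P m TR_new_r[OF _ tt] unfolding PKT_def s_def by auto
      ultimately show ?thesis using TagR m dn iN unfolding PKT_def by auto
    next
      case (ToReader rid t c)
      then show ?thesis using ok dn iN ws unfolding OKout_def PKT_def by auto
    next
      case (Ack t)
      then show ?thesis using ok dn iN ws unfolding OKout_def PKT_def by auto
    next
      case (MDCoded t c)
      then show ?thesis using ok dn iN ws unfolding OKout_def PKT_def by (auto; blast)
    qed (use ok dn iN ws in \<open>auto simp: OKout_def PKT_def\<close>)
  qed
  show "Inv s'"
    unfolding Inv_def
  proof (intro conjI allI impI)
    fix p q m assume "(p, q, m) \<in># net s'"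
    then have "(p, q, m) \<in># net s" unfolding s' s_def by (auto dest: in_diffD)
    then show "PKT (srv s') (wrs s') (rds s') p q m" using Ip(1) PKT_grow[OF _ g] by blast
  next
    fix p' q m assume a: "(q, m) \<in> set (outb s' p')"
    show "PKT (srv s') (wrs s') (rds s') p' q m"
    proof (cases "p' = PS i \<and> (q, m) \<notin> set (outb s p')")
      case True then show ?thesis using a newp unfolding s' s_def by auto
    next
      case False then have "(q, m) \<in> set (outb s p')" using a unfolding s' s_def by (auto split: if_splits)
      then show ?thesis using Ip(2) PKT_grow[OF _ g] by blast
    qed
  next
    fix i' show "SP (srv s') (wrs s') i'"
    proof (cases "i' = i")
      case True then show ?thesis using R ws unfolding SP_def by simp
    next
      case False then show ?thesis using SP_grow[OF Is g] unfolding s' s_def by simp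
    qed
  next
    fix w' show "WP (srv s') (wrs s' w') w'" using WP_grow[OF Iw[of w'] g] ws by simp
  next
    fix r show "RP (srv s') (wrs s') (rds s' r) r" using RP_grow[OF Ir g] ws by simp
  qed
qed


lemma quorum_max:
  assumes fin: "finite R" and ent: "\<forall>sv t. (sv, t) \<in> R \<longrightarrow> sv < n \<and> stag (S sv) \<le> t"
    and maj: "n < 2 * card (fst ` R)" and q: "quorum S T"
  shows "T \<le> Max (snd ` R)"
proof -
  let ?A = "{i. i < n \<and> T \<le> stag (S i)}"
  have "?A \<inter> fst ` R \<noteq> {}"
    by (rule quorum_inter[OF _ _ _ maj f_bound]) (use q ent in \<open>auto simp: quorum_def\<close>)
  then obtain sv t where a: "(sv, t) \<in> R" "T \<le> stag (S sv)" by auto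
  have "stag (S sv) \<le> t" using ent a by blast
  moreover have "t \<le> Max (snd ` R)" using fin a by (metis Max_ge finite_imageI image_eqI snd_conv)
  ultimately show ?thesis using a order_trans by blast
qed

lemma wr_recv_other:
  "(\<nexists>s0 j t. p = PS s0 \<and> m = TagR j t) \<Longrightarrow> (\<nexists>s0 t. p = PS s0 \<and> m = Ack t) \<Longrightarrow> wr_recv n f w p m \<sigma> = (\<sigma>, [])"
  by (cases p; cases m) auto

lemma wr_step:
  assumes wr: "wr_recv n f w p m (wrs (st k) w) = (\<sigma>', os)"
    and P: "PKT (srv (st k)) (wrs (st k)) (rds (st k)) p (PW w) m"
    and W: "WP (srv (st k)) (wrs (st k) w) w"
  shows "wcnt \<sigma>' = wcnt (wrs (st k) w) \<and> (\<forall>j x. wlog (wrs (st k) w) j = Some x \<longrightarrow> wlog \<sigma>' j = Some x)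
     \<and> WP (srv (st k)) \<sigma>' w
     \<and> (\<forall>d m'. (d, m') \<in> set os \<longrightarrow> (\<exists>j' t v. d = PS j' \<and> j' \<le> f \<and> m' = MDFull t v \<and> (\<exists>j. wlog \<sigma>' j = Some (t, v))))"
proof -
  define s where "s = st k"
  define \<sigma> where "\<sigma> = wrs s w"
  have wr': "wr_recv n f w p m \<sigma> = (\<sigma>', os)" using wr unfolding \<sigma>_def s_def .
  have P': "PKT (srv s) (wrs s) (rds s) p (PW w) m" using P unfolding s_def .
  have W1: "\<And>j t v. wlog \<sigma> j = Some (t, v) \<Longrightarrow> (\<exists>z. t = Tag z w) \<and> 1 \<le> j \<and> j \<le> wcnt \<sigma> \<and> QW w j t"
    and W2: "\<And>j v R. wph \<sigma> = WGet j v R \<Longrightarrow> j = wcnt \<sigma> \<and> 1 \<le> j \<and> wlog \<sigma> j = None \<and> finite R \<and>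
       (\<forall>sv t. (sv, t) \<in> R \<longrightarrow> sv < n \<and> TRw w j sv t)"
    and W3: "\<And>j tw A. wph \<sigma> = WPut j tw A \<Longrightarrow> j = wcnt \<sigma> \<and> (\<exists>v. wlog \<sigma> j = Some (tw, v)) \<and>
       (\<forall>sv\<in>A. sv < n \<and> tw \<le> stag (srv s sv))"
    and W4: "\<And>j. 1 \<le> j \<Longrightarrow> j \<le> wcnt \<sigma> \<Longrightarrow> (j < wcnt \<sigma> \<or> wph \<sigma> = WIdle) \<Longrightarrow> j \<in> wdone \<sigma>"
    and W5: "\<And>j. j \<in> wdone \<sigma> \<Longrightarrow> \<exists>t v. wlog \<sigma> j = Some (t, v) \<and> quorum (srv s) t"
    using W unfolding WP_def \<sigma>_def s_def by blast+
  have WPI: "WP (srv s) \<sigma> w" using W unfolding \<sigma>_def s_def .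
  show ?thesis
  proof (cases "\<exists>s0 j t. p = PS s0 \<and> m = TagR j t")
    case True
    then obtain s0 j t where pm: "p = PS s0" "m = TagR j t" by blast
    have s0n: "s0 < n" and tr: "TRw w j s0 t" using P' pm unfolding PKT_def by auto
    show ?thesis
    proof (cases "\<exists>v R. wph \<sigma> = WGet j v R")
      case False
      then have "\<sigma>' = \<sigma> \<and> os = []" using wr' pm by (auto split: wphase.splits)
      then show ?thesis using WPI unfolding \<sigma>_def s_def by auto
    next
      case True
      then obtain v R where ph: "wph \<sigma> = WGet j v R" by blast
      note w2 = W2[OF ph]
      let ?R' = "insert (s0, t) R"
      show ?thesis
      proof (cases "n < 2 * card (fst ` ?R')")
        case maj: True
        define tw where "tw = Tag (Suc (tz (Max (snd ` ?R')))) w"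
        have eq: "\<sigma>' = \<sigma>\<lparr>wph := WPut j tw {}, wlog := (wlog \<sigma>)(j \<mapsto> (tw, v))\<rparr>" "os = md_value_send f tw v"
          using wr' pm ph maj unfolding tw_def by (auto simp: Let_def)
        have qw: "QW w j tw" unfolding QW_def
        proof (intro allI impI)
          fix i0 T assume c: "wcnt (wrs (st i0) w) < j" and q: "quorum (srv (st i0)) T"
          have ent: "\<forall>sv t'. (sv, t') \<in> ?R' \<longrightarrow> sv < n \<and> stag (srv (st i0) sv) \<le> t'"
            using w2 s0n tr c unfolding TRw_def by auto
          have "T \<le> Max (snd ` ?R')" using quorum_max[OF _ ent maj q] w2 by blast
          then show "T < tw" unfolding tw_def by (rule tag_less_succ)
        qed
        have wpn: "WP (srv s) \<sigma>' w" unfolding WP_def eq(1)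
          apply (intro conjI)
          subgoal using W1 w2 qw by (auto simp: tw_def)
          subgoal by simp
          subgoal using w2 by simp
          subgoal using W4 ph by simp
          subgoal using W5 w2 by fastforce
          done
        show ?thesis using wpn w2 unfolding eq s_def \<sigma>_def
          by (auto simp: md_value_send_def less_Suc_eq_le)
      next
        case nmaj: False
        have eq: "\<sigma>' = \<sigma>\<lparr>wph := WGet j v ?R'\<rparr>" "os = []"
          using wr' pm ph nmaj by (auto simp: Let_def)
        have wpn: "WP (srv s) \<sigma>' w" unfolding WP_def eq(1)
          apply (intro conjI)
          subgoal using W1 by simp
          subgoal using w2 s0n tr by auto
          subgoal by simp
          subgoal using W4 ph by simp
          subgoal using W5 by simp
          done
        show ?thesis using wpn unfolding eq s_def \<sigma>_def by auto
      qed
    qed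
  next
    case notR: False
    show ?thesis
    proof (cases "\<exists>s0 t. p = PS s0 \<and> m = Ack t")
      case False
      then have "\<sigma>' = \<sigma> \<and> os = []" using wr' notR wr_recv_other by (metis prod.inject)
      then show ?thesis using WPI unfolding \<sigma>_def s_def by auto
    next
      case True
      then obtain s0 t where pm: "p = PS s0" "m = Ack t" by blast
      have s0n: "s0 < n" and ak: "t \<le> stag (srv s s0)" using P' pm unfolding PKT_def by auto
      show ?thesis
      proof (cases "\<exists>j A. wph \<sigma> = WPut j t A")
        case False
        then have "\<sigma>' = \<sigma> \<and> os = []" using wr' pm by (auto split: wphase.splits)
        then show ?thesis using WPI unfolding \<sigma>_def s_def by auto
      next
        case True
        then obtain j A where ph: "wph \<sigma> = WPut j t A" by blast
        note w3 = W3[OF ph]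
        let ?A' = "insert s0 A"
        have A'sub: "?A' \<subseteq> {i. i < n \<and> t \<le> stag (srv s i)}" using w3 s0n ak by auto
        show ?thesis
        proof (cases "n - f \<le> card ?A'")
          case cmp: True
          have eq: "\<sigma>' = \<sigma>\<lparr>wph := WIdle, wdone := insert j (wdone \<sigma>)\<rparr>" "os = []"
            using wr' pm ph cmp by (auto simp: Let_def)
          have q: "quorum (srv s) t" unfolding quorum_def
          proof -
            have fin: "finite {i. i < n \<and> t \<le> stag (srv s i)}" by simp
            show "n - f \<le> card {i. i < n \<and> t \<le> stag (srv s i)}" using cmp card_mono[OF fin A'sub] by linarith
          qed
          have wpn: "WP (srv s) \<sigma>' w" unfolding WP_def eq(1)
            apply (intro conjI)
            subgoal using W1 by simp
            subgoal by simp
            subgoal by simp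
            subgoal using W4 ph w3 by (auto simp: le_less)
            subgoal using W5 w3 q by auto
            done
          show ?thesis using wpn unfolding eq s_def \<sigma>_def by auto
        next
          case ncmp: False
          have eq: "\<sigma>' = \<sigma>\<lparr>wph := WPut j t ?A'\<rparr>" "os = []"
            using wr' pm ph ncmp by (auto simp: Let_def)
          have wpn: "WP (srv s) \<sigma>' w" unfolding WP_def eq(1)
            apply (intro conjI)
            subgoal using W1 by simp
            subgoal by simp
            subgoal using w3 s0n ak by auto
            subgoal using W4 ph by simp
            subgoal using W5 by simp
            done
          show ?thesis using wpn unfolding eq s_def \<sigma>_def by auto
        qed
      qed
    qed
  qed
qed

end

context soda_ex begin

lemma inv_dw:
  assumes I: "Inv (st k)" and pk: "(p, PW w, m) \<in># net (st k)"
    and wr: "wr_recv n f w p m (wrs (st k) w) = (\<sigma>', os)"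
    and s': "s' = (st k)\<lparr>net := net (st k) - {# (p, PW w, m) #}, wrs := (wrs (st k))(w := \<sigma>'),
                outb := (outb (st k))(PW w := outb (st k) (PW w) @ os)\<rparr>"
  shows "Inv s'"
proof -
  define s where "s = st k"
  have Ip: "\<And>p q m. (p, q, m) \<in># net s \<Longrightarrow> PKT (srv s) (wrs s) (rds s) p q m"
     "\<And>p q m. (q, m) \<in> set (outb s p) \<Longrightarrow> PKT (srv s) (wrs s) (rds s) p q m"
     and Is: "\<And>i. SP (srv s) (wrs s) i" and Iw: "\<And>w. WP (srv s) (wrs s w) w"
     and Ir: "\<And>r. RP (srv s) (wrs s) (rds s r) r"
    using I unfolding Inv_def s_def by blast+
  have P: "PKT (srv s) (wrs s) (rds s) p (PW w) m" using Ip(1) pk unfolding s_def by blast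
  have R: "wcnt \<sigma>' = wcnt (wrs (st k) w) \<and> (\<forall>j x. wlog (wrs (st k) w) j = Some x \<longrightarrow> wlog \<sigma>' j = Some x)
     \<and> WP (srv (st k)) \<sigma>' w
     \<and> (\<forall>d m'. (d, m') \<in> set os \<longrightarrow> (\<exists>j' t v. d = PS j' \<and> j' \<le> f \<and> m' = MDFull t v \<and> (\<exists>j. wlog \<sigma>' j = Some (t, v))))"
    using wr_step[OF wr P[unfolded s_def] Iw[of w, unfolded s_def]] .
  have g: "grows (srv s) (wrs s) (rds s) (srv s') (wrs s') (rds s')"
    using R unfolding grows_def s' s_def by auto
  have ws: "srv s' = srv s" "rds s' = rds s" "wrs s' w = \<sigma>'" unfolding s' s_def by auto
  have newp: "PKT (srv s') (wrs s') (rds s') (PW w) d m'" if a: "(d, m') \<in> set os" for d m'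
  proof -
    obtain j' t v j where "d = PS j'" "j' \<le> f" "m' = MDFull t v" "wlog \<sigma>' j = Some (t, v)" using R a by blast
    then show ?thesis using ws f_bound unfolding PKT_def by auto
  qed
  show "Inv s'"
    unfolding Inv_def
  proof (intro conjI allI impI)
    fix p q m assume "(p, q, m) \<in># net s'"
    then have "(p, q, m) \<in># net s" unfolding s' s_def by (auto dest: in_diffD)
    then show "PKT (srv s') (wrs s') (rds s') p q m" using Ip(1) PKT_grow[OF _ g] by blast
  next
    fix p' q m assume a: "(q, m) \<in> set (outb s' p')"
    show "PKT (srv s') (wrs s') (rds s') p' q m"
    proof (cases "p' = PW w \<and> (q, m) \<notin> set (outb s p')")
      case True then show ?thesis using a newp unfolding s' s_def by auto
    next
      case False then have "(q, m) \<in> set (outb s p')" using a unfolding s' s_def by (auto split: if_splits)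
      then show ?thesis using Ip(2) PKT_grow[OF _ g] by blast
    qed
  next
    fix i' show "SP (srv s') (wrs s') i'" using SP_grow[OF Is g] ws by simp
  next
    fix w' show "WP (srv s') (wrs s' w') w'"
    proof (cases "w' = w")
      case True then show ?thesis using R ws unfolding s_def by simp
    next
      case False then show ?thesis using WP_grow[OF Iw[of w'] g] unfolding s' s_def by simp
    qed
  next
    fix r show "RP (srv s') (wrs s') (rds s' r) r" using RP_grow[OF Ir g] ws by simp
  qed
qed

lemma rd_recv_other:
  assumes "rd_recv n f dec r p m \<sigma> \<sigma>' os"
    "\<nexists>s0 j t j' R. p = PS s0 \<and> m = TagR j t \<and> rph \<sigma> = RGet j' R"
    "\<nexists>s0 rid t c j tr P. p = PS s0 \<and> m = ToReader rid t c \<and> rph \<sigma> = RData j tr P"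
  shows "\<sigma>' = \<sigma> \<and> os = []"
  using assms unfolding rd_recv_def by (auto split: proc.splits msg.splits rphase.splits)

lemma rd_step:
  assumes rd: "rd_recv n f dec r p m (rds (st k) r) \<sigma>' os"
    and P: "PKT (srv (st k)) (wrs (st k)) (rds (st k)) p (PR r) m"
    and RR: "RP (srv (st k)) (wrs (st k)) (rds (st k) r) r"
  shows "rcnt \<sigma>' = rcnt (rds (st k) r) \<and> (\<forall>j x. rlog (rds (st k) r) j = Some x \<longrightarrow> rlog \<sigma>' j = Some x) \<and> RP (srv (st k)) (wrs (st k)) \<sigma>' r
     \<and> (\<forall>d m'. (d, m') \<in> set os \<longrightarrow> (\<exists>j' mm. d = PS j' \<and> j' \<le> f \<and> m' = MDMeta mm \<and>
            (\<forall>rid tr. mm = ReadValue rid tr \<longrightarrow> Qall rid tr)))"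
proof -
  define s where "s = st k"
  define \<sigma> where "\<sigma> = rds s r"
  have rd': "rd_recv n f dec r p m \<sigma> \<sigma>' os" using rd unfolding \<sigma>_def s_def .
  have P': "PKT (srv s) (wrs s) (rds s) p (PR r) m" using P unfolding s_def .
  have R1: "\<And>j t v. rlog \<sigma> j = Some (t, v) \<Longrightarrow> 1 \<le> j \<and> j \<le> rcnt \<sigma> \<and> Qall (r, j) t \<and> quorum (srv s) t \<and>
      (\<exists>X g. X \<subseteq> {..<n} \<and> card X = n - f \<and> (\<forall>x\<in>X. okc (wrs s) t x (g x)) \<and>
          v = dec (\<lambda>x. if x \<in> X then Some (g x) else None))"
    and R2: "\<And>j R. rph \<sigma> = RGet j R \<Longrightarrow> j = rcnt \<sigma> \<and> 1 \<le> j \<and> rlog \<sigma> j = None \<and> finite R \<and>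
       (\<forall>sv t. (sv, t) \<in> R \<longrightarrow> sv < n \<and> TRr r j sv t)"
    and R3: "\<And>j tr P. rph \<sigma> = RData j tr P \<Longrightarrow> j = rcnt \<sigma> \<and> 1 \<le> j \<and> rlog \<sigma> j = None \<and>
       (\<forall>sv t c. (sv, t, c) \<in> P \<longrightarrow> sv < n \<and> t \<le> stag (srv s sv) \<and> okc (wrs s) t sv c \<and> Qall (r, j) t)"
    using RR unfolding RP_def \<sigma>_def s_def by blast+
  have RPI: "RP (srv s) (wrs s) \<sigma> r" using RR unfolding \<sigma>_def s_def .
  have mds: "\<And>mm d m'. (d, m') \<in> set (md_meta_send f mm) \<Longrightarrow> \<exists>j'. d = PS j' \<and> j' \<le> f \<and> m' = MDMeta mm"
    by (auto simp: md_meta_send_def less_Suc_eq_le)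
  show ?thesis
  proof (cases "\<exists>s0 j t j' R. p = PS s0 \<and> m = TagR j t \<and> rph \<sigma> = RGet j' R")
    case True
    then obtain s0 j t j' R where pm: "p = PS s0" "m = TagR j t" and ph: "rph \<sigma> = RGet j' R" by blast
    have s0n: "s0 < n" and tr: "TRr r j s0 t" using P' pm unfolding PKT_def by auto
    note r2 = R2[OF ph]
    show ?thesis
    proof (cases "j = j'")
      case False
      then have "\<sigma>' = \<sigma> \<and> os = []" using rd' pm ph by (auto simp: rd_recv_def)
      then show ?thesis using RPI unfolding \<sigma>_def s_def by auto
    next
      case jj: True
      let ?R' = "insert (s0, t) R"
      show ?thesis
      proof (cases "n < 2 * card (fst ` ?R')")
        case maj: True
        define tr where "tr = Max (snd ` ?R')"
        have eq: "\<sigma>' = \<sigma>\<lparr>rph := RData j tr {}\<rparr>" "os = md_meta_send f (ReadValue (r, j) tr)"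
          using rd' pm ph maj jj unfolding tr_def by (auto simp: rd_recv_def Let_def)
        have qa: "Qall (r, j) tr" unfolding Qall_def
        proof (intro allI impI)
          fix i0 T assume c: "rcnt (rds (st i0) (fst (r, j))) < snd (r, j)" and q: "quorum (srv (st i0)) T"
          have ent: "\<forall>sv t'. (sv, t') \<in> ?R' \<longrightarrow> sv < n \<and> stag (srv (st i0) sv) \<le> t'"
            using r2 s0n tr c jj unfolding TRr_def by auto
          show "T \<le> tr" using quorum_max[OF _ ent maj q] r2 unfolding tr_def by blast
        qed
        have rpn: "RP (srv s) (wrs s) \<sigma>' r" unfolding RP_def eq(1)
          apply (intro conjI)
          subgoal using R1 by simp
          subgoal by simp
          subgoal using r2 jj by auto
          done
        show ?thesis using rpn qa mds unfolding eq s_def \<sigma>_def by fastforce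
      next
        case nmaj: False
        have eq: "\<sigma>' = \<sigma>\<lparr>rph := RGet j ?R'\<rparr>" "os = []"
          using rd' pm ph nmaj jj by (auto simp: rd_recv_def Let_def)
        have rpn: "RP (srv s) (wrs s) \<sigma>' r" unfolding RP_def eq(1)
          apply (intro conjI)
          subgoal using R1 by simp
          subgoal using r2 s0n tr jj by auto
          subgoal by simp
          done
        show ?thesis using rpn unfolding eq s_def \<sigma>_def by auto
      qed
    qed
  next
    case notA: False
    show ?thesis
    proof (cases "\<exists>s0 rid t c j tr P. p = PS s0 \<and> m = ToReader rid t c \<and> rph \<sigma> = RData j tr P")
      case False
      then have "\<sigma>' = \<sigma> \<and> os = []" using rd_recv_other[OF rd' notA] by blast
      then show ?thesis using RPI unfolding \<sigma>_def s_def by auto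
    next
      case True
      then obtain s0 rid t c j tr PP where pm: "p = PS s0" "m = ToReader rid t c" and ph: "rph \<sigma> = RData j tr PP"
        by blast
      note r3 = R3[OF ph]
      have s0n: "s0 < n" and tk: "t \<le> stag (srv s s0)" "okc (wrs s) t s0 c" and qq: "Qall rid t"
        using P' pm unfolding PKT_def by auto
      show ?thesis
      proof (cases "rid = (r, j)")
        case False
        then have "\<sigma>' = \<sigma> \<and> os = []" using rd' pm ph by (auto simp: rd_recv_def)
        then show ?thesis using RPI unfolding \<sigma>_def s_def by auto
      next
        case rj: True
        let ?P' = "insert (s0, t, c) PP"
        have ent: "\<forall>sv t' c'. (sv, t', c') \<in> ?P' \<longrightarrow> sv < n \<and> t' \<le> stag (srv s sv) \<and> okc (wrs s) t' sv c' \<and> Qall (r, j) t'"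
          using r3 s0n tk qq rj by auto
        show ?thesis
        proof (cases "n - f \<le> card {s'. \<exists>c'. (s', t, c') \<in> ?P'}")
          case en: True
          obtain X g where X: "X \<subseteq> {s'. (s', t, g s') \<in> ?P'}" "card X = n - f"
            and eq: "\<sigma>' = \<sigma>\<lparr>rph := RIdle, rlog := (rlog \<sigma>)(j \<mapsto> (t, dec (\<lambda>x. if x \<in> X then Some (g x) else None)))\<rparr>"
                    "os = md_meta_send f (ReadComplete (r, j) tr)"
            using rd' pm ph rj en by (auto simp: rd_recv_def Let_def)
          have Xn: "X \<subseteq> {..<n}" using X ent by auto
          have Xo: "\<forall>x\<in>X. okc (wrs s) t x (g x)" using X ent by auto
          have Xne: "X \<noteq> {}" using X(2) f_bound by auto
          then obtain x0 where "x0 \<in> X" by blast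
          then have qa: "Qall (r, j) t" using X ent by blast
          have q: "quorum (srv s) t" unfolding quorum_def
          proof -
            have sub: "X \<subseteq> {i. i < n \<and> t \<le> stag (srv s i)}" using X ent by auto
            have fin: "finite {i. i < n \<and> t \<le> stag (srv s i)}" by simp
            show "n - f \<le> card {i. i < n \<and> t \<le> stag (srv s i)}" using X(2) card_mono[OF fin sub] by linarith
          qed
          have rpn: "RP (srv s) (wrs s) \<sigma>' r" unfolding RP_def eq(1)
            apply (intro conjI)
            subgoal using R1 r3 qa q Xn X(2) Xo by auto
            subgoal by simp
            subgoal by simp
            done
          show ?thesis using rpn mds r3 unfolding eq s_def \<sigma>_def by fastforce
        next
          case nen: False
          have eq: "\<sigma>' = \<sigma>\<lparr>rph := RData j tr ?P'\<rparr>" "os = []"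
            using rd' pm ph nen rj by (auto simp: rd_recv_def Let_def)
          have rpn: "RP (srv s) (wrs s) \<sigma>' r" unfolding RP_def eq(1)
            apply (intro conjI)
            subgoal using R1 by simp
            subgoal by simp
            subgoal using r3 ent by auto
            done
          show ?thesis using rpn unfolding eq s_def \<sigma>_def by auto
        qed
      qed
    qed
  qed
qed

end

context soda_ex begin

lemma inv_dr:
  assumes I: "Inv (st k)" and pk: "(p, PR r, m) \<in># net (st k)"
    and rd: "rd_recv n f dec r p m (rds (st k) r) \<sigma>' os"
    and s': "s' = (st k)\<lparr>net := net (st k) - {# (p, PR r, m) #}, rds := (rds (st k))(r := \<sigma>'),
                outb := (outb (st k))(PR r := outb (st k) (PR r) @ os)\<rparr>"
  shows "Inv s' \<and> (\<forall>j x. rlog (rds (st k) r) j = Some x \<longrightarrow> rlog \<sigma>' j = Some x)"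
proof -
  define s where "s = st k"
  have Ip: "\<And>p q m. (p, q, m) \<in># net s \<Longrightarrow> PKT (srv s) (wrs s) (rds s) p q m"
     "\<And>p q m. (q, m) \<in> set (outb s p) \<Longrightarrow> PKT (srv s) (wrs s) (rds s) p q m"
     and Is: "\<And>i. SP (srv s) (wrs s) i" and Iw: "\<And>w. WP (srv s) (wrs s w) w"
     and Ir: "\<And>r. RP (srv s) (wrs s) (rds s r) r"
    using I unfolding Inv_def s_def by blast+
  have P: "PKT (srv s) (wrs s) (rds s) p (PR r) m" using Ip(1) pk unfolding s_def by blast
  have R: "rcnt \<sigma>' = rcnt (rds (st k) r) \<and> (\<forall>j x. rlog (rds (st k) r) j = Some x \<longrightarrow> rlog \<sigma>' j = Some x) \<and> RP (srv (st k)) (wrs (st k)) \<sigma>' r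
     \<and> (\<forall>d m'. (d, m') \<in> set os \<longrightarrow> (\<exists>j' mm. d = PS j' \<and> j' \<le> f \<and> m' = MDMeta mm \<and>
            (\<forall>rid tr. mm = ReadValue rid tr \<longrightarrow> Qall rid tr)))"
    using rd_step[OF rd P[unfolded s_def] Ir[of r, unfolded s_def]] .
  have g: "grows (srv s) (wrs s) (rds s) (srv s') (wrs s') (rds s')"
    using R unfolding grows_def s' s_def by auto
  have ws: "srv s' = srv s" "wrs s' = wrs s" "rds s' r = \<sigma>'" unfolding s' s_def by auto
  have newp: "PKT (srv s') (wrs s') (rds s') (PR r) d m'" if a: "(d, m') \<in> set os" for d m'
  proof -
    obtain j' mm where "d = PS j'" "j' \<le> f" "m' = MDMeta mm" "\<forall>rid tr. mm = ReadValue rid tr \<longrightarrow> Qall rid tr"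
      using R a by blast
    then show ?thesis using f_bound unfolding PKT_def by auto
  qed
  have "Inv s'"
    unfolding Inv_def
  proof (intro conjI allI impI)
    fix p q m assume "(p, q, m) \<in># net s'"
    then have "(p, q, m) \<in># net s" unfolding s' s_def by (auto dest: in_diffD)
    then show "PKT (srv s') (wrs s') (rds s') p q m" using Ip(1) PKT_grow[OF _ g] by blast
  next
    fix p' q m assume a: "(q, m) \<in> set (outb s' p')"
    show "PKT (srv s') (wrs s') (rds s') p' q m"
    proof (cases "p' = PR r \<and> (q, m) \<notin> set (outb s p')")
      case True then show ?thesis using a newp unfolding s' s_def by auto
    next
      case False then have "(q, m) \<in> set (outb s p')" using a unfolding s' s_def by (auto split: if_splits)
      then show ?thesis using Ip(2) PKT_grow[OF _ g] by blast
    qed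
  next
    fix i' show "SP (srv s') (wrs s') i'" using SP_grow[OF Is g] ws by simp
  next
    fix w' show "WP (srv s') (wrs s' w') w'" using WP_grow[OF Iw[of w'] g] ws by simp
  next
    fix r' show "RP (srv s') (wrs s') (rds s' r') r'"
    proof (cases "r' = r")
      case True then show ?thesis using R ws unfolding s_def by simp
    next
      case False then show ?thesis using RP_grow[OF Ir[of r'] g] unfolding s' s_def by simp
    qed
  qed
  then show ?thesis using R by blast
qed

definition stable where
  "stable s s' \<longleftrightarrow> (\<forall>w j x. wlog (wrs s w) j = Some x \<longrightarrow> wlog (wrs s' w) j = Some x) \<and>
                    (\<forall>r j x. rlog (rds s r) j = Some x \<longrightarrow> rlog (rds s' r) j = Some x)"

lemma inv_step: assumes I: "Inv (st k)" shows "Inv (st (Suc k)) \<and> stable (st k) (st (Suc k))"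
  using stepi[of k]
proof (cases rule: step_cases)
  case Skip then show ?thesis using I by (simp add: stable_def)
next
  case (Send p) then show ?thesis using inv_send[OF I] by (simp add: stable_def)
next
  case (Crash p) then show ?thesis using inv_crash[OF I] by (simp add: stable_def)
next
  case (InvW w v) then show ?thesis using inv_invw[OF I] by (simp add: stable_def)
next
  case (InvR r) then show ?thesis using inv_invr[OF I] by (simp add: stable_def)
next
  case (DS p i m \<sigma>' os) then show ?thesis using inv_ds[OF I] by (simp add: stable_def)
next
  case (DW p w m \<sigma>' os)
  have P: "PKT (srv (st k)) (wrs (st k)) (rds (st k)) p (PW w) m" using I DW(1) unfolding Inv_def by blast
  have W: "WP (srv (st k)) (wrs (st k) w) w" using I unfolding Inv_def by blast
  have "\<forall>j x. wlog (wrs (st k) w) j = Some x \<longrightarrow> wlog \<sigma>' j = Some x" using wr_step[OF DW(2) P W] by blast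
  then show ?thesis using inv_dw[OF I DW(1,2,3)] DW(3) by (simp add: stable_def)
next
  case (DR p r m \<sigma>' os) then show ?thesis using inv_dr[OF I DR(1,2,3)] by (simp add: stable_def)
qed

lemma Inv_all: "Inv (st k)"
  by (induction k) (use Inv0 inv_step in auto)

lemma stable_le: "k \<le> k' \<Longrightarrow> stable (st k) (st k')"
proof (induction k' rule: dec_induct)
  case base then show ?case by (simp add: stable_def)
next
  case (step k') then show ?case using inv_step[OF Inv_all[of k']] unfolding stable_def by blast
qed

end

context soda_ex begin

lemma wlog_stable: "wlog (wrs (st k) w) j = Some x \<Longrightarrow> k \<le> k' \<Longrightarrow> wlog (wrs (st k') w) j = Some x"
  using stable_le unfolding stable_def by blast

lemma rlog_stable: "rlog (rds (st k) r) j = Some x \<Longrightarrow> k \<le> k' \<Longrightarrow> rlog (rds (st k') r) j = Some x"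
  using stable_le unfolding stable_def by blast

lemma oplog_stable: "oplog (st k) \<pi> = Some x \<Longrightarrow> k \<le> k' \<Longrightarrow> oplog (st k') \<pi> = Some x"
  by (cases \<pi>) (auto dest: wlog_stable rlog_stable)

lemma oplog_unique: "oplog (st k) \<pi> = Some x \<Longrightarrow> oplog (st k') \<pi> = Some y \<Longrightarrow> x = y"
  using oplog_stable[of k \<pi> x "max k k'"] oplog_stable[of k' \<pi> y "max k k'"] by simp

lemma optv_eq: "oplog (st k) \<pi> = Some x \<Longrightarrow> optv st \<pi> = x"
proof -
  assume a: "oplog (st k) \<pi> = Some x"
  let ?i = "SOME i. oplog (st i) \<pi> \<noteq> None"
  have "oplog (st ?i) \<pi> \<noteq> None" using a by (metis (mono_tags, lifting) option.discI someI)
  then obtain y where y: "oplog (st ?i) \<pi> = Some y" by blast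
  then have "x = y" using oplog_unique[OF a] by blast
  then show ?thesis unfolding optv_def using y by simp
qed

lemma inPi_obtain: "in_Pi st \<pi> \<Longrightarrow> \<exists>k x. oplog (st k) \<pi> = Some x"
  unfolding in_Pi_def by blast

lemma WP_at: "WP (srv (st k)) (wrs (st k) w) w" using Inv_all[of k] unfolding Inv_def by blast
lemma RP_at: "RP (srv (st k)) (wrs (st k)) (rds (st k) r) r" using Inv_all[of k] unfolding Inv_def by blast

lemma wlog_props: "wlog (wrs (st k) w) j = Some (t, v) \<Longrightarrow> (\<exists>z. t = Tag z w) \<and> 1 \<le> j \<and> j \<le> wcnt (wrs (st k) w) \<and> QW w j t"
  using WP_at[of k w] unfolding WP_def by blast

lemma wcnt_change:
  assumes "wcnt (wrs (st (Suc i)) w) \<noteq> wcnt (wrs (st i) w)"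
  shows "wph (wrs (st i) w) = WIdle \<and> wcnt (wrs (st (Suc i)) w) = Suc (wcnt (wrs (st i) w))"
  using stepi[of i]
proof (cases rule: step_cases)
  case (InvW w' v) then show ?thesis using assms by (cases "w' = w") auto
next
  case (DW p w' m \<sigma>' os) then show ?thesis using assms wr_recv_cnt by (cases "w' = w") fastforce+
qed (use assms in auto)

lemma invoc: "1 \<le> j \<Longrightarrow> j \<le> wcnt (wrs (st k) w) \<Longrightarrow> \<exists>i2. wcnt (wrs (st i2) w) = j - 1 \<and> wph (wrs (st i2) w) = WIdle"
proof (induction k)
  case 0 then show ?case by (simp add: st0 init_state_def)
next
  case (Suc k)
  show ?case
  proof (cases "j \<le> wcnt (wrs (st k) w)")
    case True then show ?thesis using Suc by blast
  next
    case False
    then have "wcnt (wrs (st (Suc k)) w) \<noteq> wcnt (wrs (st k) w)" using Suc by linarith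
    then have "wph (wrs (st k) w) = WIdle \<and> wcnt (wrs (st (Suc k)) w) = Suc (wcnt (wrs (st k) w))"
      by (rule wcnt_change)
    then show ?thesis using False Suc by (intro exI[of _ k]) auto
  qed
qed

lemma w_unique_aux:
  assumes a: "wlog (wrs (st k) w) j = Some (t, v)" and b: "wlog (wrs (st k') w) j' = Some (t, v')" and jj: "j < j'"
  shows False
proof -
  have b': "1 \<le> j' \<and> j' \<le> wcnt (wrs (st k') w) \<and> QW w j' t" using wlog_props[OF b] by blast
  have a': "1 \<le> j" using wlog_props[OF a] by blast
  obtain i2 where i2: "wcnt (wrs (st i2) w) = j' - 1" "wph (wrs (st i2) w) = WIdle" using invoc b' by blast
  have "j \<in> wdone (wrs (st i2) w)" using WP_at[of i2 w] i2 a' jj unfolding WP_def by auto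
  then obtain t1 v1 where t1: "wlog (wrs (st i2) w) j = Some (t1, v1)" "quorum (srv (st i2)) t1"
    using WP_at[of i2 w] unfolding WP_def by blast
  have "(t1, v1) = (t, v)" using oplog_unique[of i2 "OpW w j" "(t1, v1)" k "(t, v)"] t1 a by simp
  moreover have "wcnt (wrs (st i2) w) < j'" using i2 jj by linarith
  ultimately have "t < t" using b' t1 unfolding QW_def by auto
  then show False by simp
qed

lemma w_unique:
  assumes a: "wlog (wrs (st k) w) j = Some (t, v)" and b: "wlog (wrs (st k') w') j' = Some (t, v')"
  shows "w = w' \<and> j = j'"
proof -
  have "w = w'" using wlog_props[OF a] wlog_props[OF b] by auto
  moreover have "j = j'"
    using w_unique_aux[OF a b[folded calculation]] w_unique_aux[OF b[folded calculation] a]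
    by (metis linorder_neqE_nat)
  ultimately show ?thesis by blast
qed

lemma T0_less: "T0 < Tag z w" by (simp add: less_tag_def)

lemma completed_quorum:
  assumes "completed_at st \<pi> i"
  shows "\<exists>x. oplog (st (Suc i)) \<pi> = Some x \<and> quorum (srv (st (Suc i))) (fst x)"
proof (cases \<pi>)
  case (OpW w j)
  then have "j \<in> wdone (wrs (st (Suc i)) w)" using assms by simp
  then show ?thesis using WP_at[of "Suc i" w] OpW unfolding WP_def by fastforce
next
  case (OpR r j)
  then obtain t v where "rlog (rds (st (Suc i)) r) j = Some (t, v)" using assms by fastforce
  then show ?thesis using RP_at[of "Suc i" r] OpR unfolding RP_def by fastforce
qed

lemma P1: "\<not> (precedes st \<pi>1 \<pi>2 \<and> tag_order st \<pi>2 \<pi>1)"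
proof
  assume a: "precedes st \<pi>1 \<pi>2 \<and> tag_order st \<pi>2 \<pi>1"
  then obtain i1 i2 where c: "completed_at st \<pi>1 i1" and iv: "invoked_at st \<pi>2 i2" and lt: "i1 < i2"
    unfolding precedes_def by blast
  obtain x where x: "oplog (st (Suc i1)) \<pi>1 = Some x" "quorum (srv (st (Suc i1))) (fst x)"
    using completed_quorum[OF c] by blast
  have t1: "optag st \<pi>1 = fst x" using optv_eq[OF x(1)] unfolding optag_def by simp
  have q: "quorum (srv (st i2)) (fst x)"
    using quorum_grow[OF x(2)] stag_mono lt by (simp add: Suc_leI)
  have to: "in_Pi st \<pi>2" "optag st \<pi>2 < optag st \<pi>1 \<or> (optag st \<pi>2 = optag st \<pi>1 \<and> is_write \<pi>2 \<and> is_read \<pi>1)"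
    using a unfolding tag_order_def by blast+
  obtain k2 y where y: "oplog (st k2) \<pi>2 = Some y" using inPi_obtain[OF to(1)] by blast
  have t2: "optag st \<pi>2 = fst y" using optv_eq[OF y] unfolding optag_def by simp
  show False
  proof (cases \<pi>2)
    case (OpW w j)
    have "wcnt (wrs (st i2) w) < j" using iv OpW unfolding invoked_at_def by simp
    moreover obtain t v where "y = (t, v)" by (cases y)
    ultimately have "fst x < fst y" using wlog_props[of k2 w j] y OpW q unfolding QW_def by auto
    then show ?thesis using to t1 t2 by auto
  next
    case (OpR r j)
    have "rcnt (rds (st i2) r) < j" using iv OpR unfolding invoked_at_def by simp
    moreover obtain t v where "y = (t, v)" by (cases y)
    ultimately have "fst x \<le> fst y" using RP_at[of k2 r] y OpR q unfolding RP_def Qall_def by fastforce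
    then show ?thesis using to t1 t2 OpR by auto
  qed
qed

end

context soda_ex begin

lemma opw_tag:
  assumes "in_Pi st (OpW w j)"
  shows "\<exists>k z v. wlog (wrs (st k) w) j = Some (Tag z w, v) \<and> optag st (OpW w j) = Tag z w \<and> opval st (OpW w j) = v"
proof -
  obtain k x where x: "oplog (st k) (OpW w j) = Some x" using inPi_obtain[OF assms] by blast
  obtain t v where tv: "x = (t, v)" by (cases x)
  obtain z where "t = Tag z w" using wlog_props[of k w j t v] x tv by auto
  then show ?thesis using x tv optv_eq[OF x] unfolding optag_def opval_def by auto
qed

lemma P2:
  assumes "in_Pi st \<pi>1" "in_Pi st \<pi>2" "is_write \<pi>1" "\<pi>2 \<noteq> \<pi>1"
  shows "tag_order st \<pi>1 \<pi>2 \<or> tag_order st \<pi>2 \<pi>1"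
proof -
  obtain w j where p1: "\<pi>1 = OpW w j" using assms(3) by (cases \<pi>1) auto
  show ?thesis
  proof (cases "optag st \<pi>1 = optag st \<pi>2")
    case False then show ?thesis using assms unfolding tag_order_def by auto
  next
    case True
    show ?thesis
    proof (cases \<pi>2)
      case (OpR r j') then show ?thesis using assms True p1 unfolding tag_order_def by auto
    next
      case (OpW w' j')
      obtain k z v where a: "wlog (wrs (st k) w) j = Some (Tag z w, v)" "optag st \<pi>1 = Tag z w"
        using opw_tag[of w j] assms(1) p1 by blast
      obtain k' z' v' where b: "wlog (wrs (st k') w') j' = Some (Tag z' w', v')" "optag st \<pi>2 = Tag z' w'"
        using opw_tag[of w' j'] assms(2) OpW by blast
      have "w = w' \<and> j = j'" using w_unique[OF a(1)] b True a(2) by auto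
      then show ?thesis using assms(4) p1 OpW by simp
    qed
  qed
qed

lemma P3:
  assumes MDS: "\<forall>v S. S \<subseteq> {..<n} \<and> card S = n - f \<longrightarrow>
                dec (\<lambda>x. if x \<in> S then Some (enc x v) else None) = v"
    and rho: "in_Pi st \<rho>" "is_read \<rho>"
  shows "((\<nexists>\<pi>. is_write \<pi> \<and> tag_order st \<pi> \<rho>) \<longrightarrow> opval st \<rho> = v0) \<and>
          ((\<exists>\<pi>. is_write \<pi> \<and> tag_order st \<pi> \<rho>) \<longrightarrow>
             (\<exists>\<pi>. is_write \<pi> \<and> tag_order st \<pi> \<rho> \<and>
                 (\<forall>\<pi>'. is_write \<pi>' \<and> tag_order st \<pi>' \<rho> \<longrightarrow> \<pi>' = \<pi> \<or> tag_order st \<pi>' \<pi>) \<and>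
                 opval st \<rho> = opval st \<pi>))"
proof -
  obtain r j where rj: "\<rho> = OpR r j" using rho(2) by (cases \<rho>) auto
  obtain k x where x: "oplog (st k) \<rho> = Some x" using inPi_obtain[OF rho(1)] by blast
  obtain t v where tv: "x = (t, v)" by (cases x)
  have rl: "rlog (rds (st k) r) j = Some (t, v)" using x tv rj by simp
  have ov: "optag st \<rho> = t" "opval st \<rho> = v" using optv_eq[OF x] tv unfolding optag_def opval_def by auto
  obtain X g where X: "X \<subseteq> {..<n}" "card X = n - f" "\<forall>x\<in>X. okc (wrs (st k)) t x (g x)"
    "v = dec (\<lambda>x. if x \<in> X then Some (g x) else None)"
    using RP_at[of k r] rl unfolding RP_def by blast
  have Xne: "X \<noteq> {}" using X(2) f_bound by auto
  have decv: "v = u" if gx: "\<forall>x\<in>X. g x = enc x u" for u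
  proof -
    have "(\<lambda>x. if x \<in> X then Some (g x) else None) = (\<lambda>x. if x \<in> X then Some (enc x u) else None)"
      using gx by auto
    then show ?thesis using X MDS by metis
  qed
  show ?thesis
  proof (cases "t = T0")
    case True
    have "\<forall>x\<in>X. g x = enc x v0"
    proof
      fix x assume "x \<in> X"
      then have "okc (wrs (st k)) t x (g x)" using X by blast
      then show "g x = enc x v0" using True wlog_props unfolding okc_def by fastforce
    qed
    then have vv: "v = v0" using decv by blast
    have nw: "\<nexists>\<pi>. is_write \<pi> \<and> tag_order st \<pi> \<rho>"
    proof
      assume "\<exists>\<pi>. is_write \<pi> \<and> tag_order st \<pi> \<rho>"
      then obtain w' j' where o: "tag_order st (OpW w' j') \<rho>" by (metis is_write.elims(2))
      then obtain k' z v' where "optag st (OpW w' j') = Tag z w'" using opw_tag unfolding tag_order_def by blast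
      then show False using o ov True unfolding tag_order_def by (auto simp: less_tag_def)
    qed
    show ?thesis using nw vv ov by blast
  next
    case False
    obtain x0 where x0: "x0 \<in> X" using Xne by blast
    then have "okc (wrs (st k)) t x0 (g x0)" using X by blast
    then obtain w1 j1 v1 where w1: "wlog (wrs (st k) w1) j1 = Some (t, v1)" using False unfolding okc_def by blast
    have "\<forall>x\<in>X. g x = enc x v1"
    proof
      fix x assume "x \<in> X"
      then have "okc (wrs (st k)) t x (g x)" using X by blast
      then obtain w2 j2 v2 where "wlog (wrs (st k) w2) j2 = Some (t, v2)" "g x = enc x v2" using False unfolding okc_def by blast
      moreover then have "w2 = w1 \<and> j2 = j1" using w_unique[OF _ w1] by blast
      ultimately show "g x = enc x v1" using w1 by simp
    qed
    then have vv: "v = v1" using decv by blast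
    let ?\<pi> = "OpW w1 j1"
    have pi: "in_Pi st ?\<pi>" using w1 unfolding in_Pi_def by (metis oplog.simps(1) option.distinct(1))
    have ot: "optag st ?\<pi> = t" "opval st ?\<pi> = v1"
      using optv_eq[of k ?\<pi> "(t, v1)"] w1 unfolding optag_def opval_def by auto
    have to: "tag_order st ?\<pi> \<rho>" using pi rho ot ov rj unfolding tag_order_def by auto
    have last: "\<pi>' = ?\<pi> \<or> tag_order st \<pi>' ?\<pi>" if wr': "is_write \<pi>'" and to': "tag_order st \<pi>' \<rho>" for \<pi>'
    proof -
      obtain w' j' where p': "\<pi>' = OpW w' j'" using wr' by (cases \<pi>') auto
      have le: "optag st \<pi>' \<le> t" using to' ov unfolding tag_order_def by auto
      show ?thesis
      proof (cases "optag st \<pi>' = t")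
        case True
        obtain k' z v' where b: "wlog (wrs (st k') w') j' = Some (Tag z w', v')" "optag st \<pi>' = Tag z w'"
          using opw_tag[of w' j'] to' p' unfolding tag_order_def by blast
        have "w' = w1 \<and> j' = j1" using w_unique[OF _ w1, of k' w' j' v'] b True by auto
        then show ?thesis using p' by simp
      next
        case False
        then have "optag st \<pi>' < optag st ?\<pi>" using le ot by auto
        then show ?thesis using to' pi unfolding tag_order_def by auto
      qed
    qed
    have ex: "\<exists>\<pi>. is_write \<pi> \<and> tag_order st \<pi> \<rho>" using to by (intro exI[of _ ?\<pi>]) simp
    show ?thesis using ex to last vv ov ot by (intro conjI impI) (blast, intro exI[of _ ?\<pi>], auto)
  qed
qed

end

theorem theorem4:
  fixes n f :: nat
    and enc :: "nat \<Rightarrow> 'v \<Rightarrow> 'c"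
    and dec :: "(nat \<Rightarrow> 'c option) \<Rightarrow> 'v"
    and v0 :: 'v
    and st :: "nat \<Rightarrow> ('w::linorder, 'r, 'v, 'c) gst"
    and act :: "nat \<Rightarrow> ('w, 'r, 'v, 'c) action"
  assumes f_pos: "1 \<le> f"
    and f_bound: "2 * f + 1 \<le> n"
    and MDS: "\<forall>v S. S \<subseteq> {..<n} \<and> card S = n - f \<longrightarrow>
                dec (\<lambda>x. if x \<in> S then Some (enc x v) else None) = v"
    and exec: "soda_execution n f enc dec v0 st act"
    and chan: "reliable st act"
    and crashes: "card {i. i < n \<and> (\<exists>j. PS i \<in> crashed (st j))} \<le> f"
  shows
    "(\<nexists>\<pi>1 \<pi>2. precedes st \<pi>1 \<pi>2 \<and> tag_order st \<pi>2 \<pi>1)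
     \<and> (\<forall>\<pi>1 \<pi>2. in_Pi st \<pi>1 \<and> in_Pi st \<pi>2 \<and> is_write \<pi>1 \<and> \<pi>2 \<noteq> \<pi>1 \<longrightarrow>
                 tag_order st \<pi>1 \<pi>2 \<or> tag_order st \<pi>2 \<pi>1)
     \<and> (\<forall>\<rho>. in_Pi st \<rho> \<and> is_read \<rho> \<longrightarrow>
          ((\<nexists>\<pi>. is_write \<pi> \<and> tag_order st \<pi> \<rho>) \<longrightarrow> opval st \<rho> = v0) \<and>
          ((\<exists>\<pi>. is_write \<pi> \<and> tag_order st \<pi> \<rho>) \<longrightarrow>
             (\<exists>\<pi>. is_write \<pi> \<and> tag_order st \<pi> \<rho> \<and>
                 (\<forall>\<pi>'. is_write \<pi>' \<and> tag_order st \<pi>' \<rho> \<longrightarrow> \<pi>' = \<pi> \<or> tag_order st \<pi>' \<pi>) \<and>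
                 opval st \<rho> = opval st \<pi>)))"
proof -
  interpret soda_ex n f enc dec v0 st act
    using f_pos f_bound exec by unfold_locales
  show ?thesis using P1 P2 P3[OF MDS] by blast
qed


end
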